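(* Let $b_0>0$. There exists $\delta_5(b_0)>0$ such that for all $\delta\in(0,\delta_5)$ there exists $s_5(b_0,\delta)\ge1$ such that for all $s_0\ge s_5$: if $(q,b)(s)\in V_{\delta,b_0}(s)$ for all $s\in[s_0,\bar s]$ (some $\bar s>s_0$), then $$|P_n(\mathcal N(q))(s)|\le CI(s)^{-2\delta}\quad\text{for all }s\in[s_0,\bar s],\ n\in\{0,1,\dots,[M]\},$$ where $\mathcal N(q)=|1+e_{b}q|^{p-1}(1+e_{b}q)-1-pe_{b}q$ with $b=b(s)$ and $C$ is independent of $s$ and $s_0$.
   Context: Fix $p>1$ and an integer $k\ge2$. Let $I(s)=e^{\frac s2(1-\frac1k)}$, $M=\frac{2kp}{p-1}$, $[M]$ the largest integer less than $M$, $e_b(y)=(p-1+by^{2k})^{-1}$. Let $\rho_s(y)=\frac{I(s)}{\sqrt{4\pi}}e^{-I(s)^2y^2/4}$, $\langle f,g\rangle_{L^2_{\rho_s}}=\int fg\rho_s\,dy$, $H_m(y,s)=\sum_{\ell=0}^{[m/2]}\frac{m!}{\ell!(m-2\ell)!}(-I(s)^{-2})^\ell y^{m-2\ell}$; $P_m(g)=\langle g,H_m\rangle_{L^2_{\rho_s}}/\langle H_m,H_m\rangle_{L^2_{\rho_s}}$, $q_m=P_m(q)$, $q_-=q-\sum_{m=0}^{[M]}q_mH_m$, $|g|_s=\sup_y\frac{|g(y)|}{I(s)^{-M}+|y|^M}$. The shrinking set $V_{\delta,b_0}(s)$ is the set of pairs $(q,b)$ ($q$ with $(1+|y|^M)^{-1}q\in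 L^\infty$, $b\in\mathbb R$) with $|q_m|\le I(s)^{-\delta}$ for $0\le m\le[M]$, $m\ne2k$; $|q_{2k}|\le I(s)^{-2\delta}$; $|q_-|_s\le I(s)^{-\delta}$; and $\frac{b_0}2\le b\le2b_0$. *)

theory Defs
  imports "HOL-Analysis.Analysis"
begin

text \<open>Fixed parameters: p > 1 (real), k \<ge> 2 (natural number).
  Functions of y are real => real; s is the self-similar time.\<close>

definition Ifun :: "nat \<Rightarrow> real \<Rightarrow> real" where
  "Ifun k s = exp (s / 2 * (1 - 1 / real k))"

definition Mexp :: "real \<Rightarrow> nat \<Rightarrow> real" where
  "Mexp p k = 2 * real k * p / (p - 1)"

text \<open>[M]: the largest integer strictly less than M (M > 0 here).\<close>
definition Mfl :: "real \<Rightarrow> nat \<Rightarrow> nat" where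
  "Mfl p k = nat (\<lceil>Mexp p k\<rceil> - 1)"

definition eb :: "real \<Rightarrow> nat \<Rightarrow> real \<Rightarrow> real \<Rightarrow> real" where
  "eb p k b y = 1 / (p - 1 + b * y ^ (2 * k))"

definition rho :: "nat \<Rightarrow> real \<Rightarrow> real \<Rightarrow> real" where
  "rho k s y = Ifun k s / sqrt (4 * pi) * exp (- (Ifun k s)\<^sup>2 * y\<^sup>2 / 4)"

definition inner_rho :: "nat \<Rightarrow> real \<Rightarrow> (real \<Rightarrow> real) \<Rightarrow> (real \<Rightarrow> real) \<Rightarrow> real" where
  "inner_rho k s f g = (\<integral>y. f y * g y * rho k s y \<partial>lborel)"

definition Hpol :: "nat \<Rightarrow> nat \<Rightarrow> real \<Rightarrow> real \<Rightarrow> real" where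
  "Hpol k m s y = (\<Sum>l = 0..m div 2. fact m / (fact l * fact (m - 2 * l))
       * (- 1 / (Ifun k s)\<^sup>2) ^ l * y ^ (m - 2 * l))"

definition Proj :: "nat \<Rightarrow> real \<Rightarrow> nat \<Rightarrow> (real \<Rightarrow> real) \<Rightarrow> real" where
  "Proj k s m g = inner_rho k s g (Hpol k m s) / inner_rho k s (Hpol k m s) (Hpol k m s)"

definition qminus :: "real \<Rightarrow> nat \<Rightarrow> real \<Rightarrow> (real \<Rightarrow> real) \<Rightarrow> real \<Rightarrow> real" where
  "qminus p k s q y = q y - (\<Sum>m = 0..Mfl p k. Proj k s m q * Hpol k m s y)"

text \<open>The condition
  (1+|y|^M)^{-1} q \<in> L^\<infinity> is rendered as measurability plus essential boundedness;
  the norm bound |q_-|_s \<le> I^{-\<delta>} is the unfolded sup bound.\<close>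
definition inV :: "real \<Rightarrow> nat \<Rightarrow> real \<Rightarrow> real \<Rightarrow> real \<Rightarrow> (real \<Rightarrow> real) \<Rightarrow> real \<Rightarrow> bool" where
  "inV p k \<delta> b0 s q b \<longleftrightarrow>
     (\<lambda>y. q y / (1 + \<bar>y\<bar> powr Mexp p k)) \<in> borel_measurable lborel \<and>
     (\<exists>C. AE y in lborel. \<bar>q y / (1 + \<bar>y\<bar> powr Mexp p k)\<bar> \<le> C) \<and>
     (\<forall>m \<le> Mfl p k. m \<noteq> 2 * k \<longrightarrow> \<bar>Proj k s m q\<bar> \<le> Ifun k s powr (- \<delta>)) \<and>
     \<bar>Proj k s (2 * k) q\<bar> \<le> Ifun k s powr (- 2 * \<delta>) \<and>
     (\<forall>y. \<bar>qminus p k s q y\<bar> / (Ifun k s powr (- Mexp p k) + \<bar>y\<bar> powr Mexp p k)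
           \<le> Ifun k s powr (- \<delta>)) \<and>
     b0 / 2 \<le> b \<and> b \<le> 2 * b0"

definition Nq :: "real \<Rightarrow> nat \<Rightarrow> real \<Rightarrow> (real \<Rightarrow> real) \<Rightarrow> real \<Rightarrow> real" where
  "Nq p k b q y = \<bar>1 + eb p k b y * q y\<bar> powr (p - 1) * (1 + eb p k b y * q y)
                  - 1 - p * eb p k b y * q y"

end

theory Submission
  imports Defs "HOL-Probability.Distributions" "HOL-Complex_Analysis.Complex_Analysis"
begin


definition rho0 :: "real \<Rightarrow> real" where "rho0 = normal_density 0 (sqrt 2)"

lemma rho0_nonneg: "0 \<le> rho0 z" by (simp add: rho0_def)

lemma rho0_mom_int: "integrable lborel (\<lambda>z. rho0 z * z ^ j)"
  using integrable_normal_moment[where \<sigma>="sqrt 2" and \<mu>=0 and k=j] by (simp add: rho0_def)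

lemma rho0_absmom_int: "integrable lborel (\<lambda>z. rho0 z * \<bar>z\<bar> ^ j)"
  using integrable_normal_moment_abs[where \<sigma>="sqrt 2" and \<mu>=0 and k=j] by (simp add: rho0_def)

lemma rho0_meas[measurable]: "rho0 \<in> borel_measurable borel"
  by (simp add: rho0_def)

definition mom :: "nat \<Rightarrow> real" where "mom j = (\<integral>z. rho0 z * z ^ j \<partial>lborel)"

lemma mom_even: "mom (2*m) = fact (2*m) / fact m"
  using integral_normal_moment_even[of "sqrt 2" 0 m] by (simp add: mom_def rho0_def)

lemma mom_odd: "mom (2*m+1) = 0"
  using integral_normal_moment_odd[of "sqrt 2" 0 m] by (simp add: mom_def rho0_def)

lemma mom_0: "mom 0 = 1"
  using mom_even[of 0] by simp

lemma mom_rec: "mom (Suc (Suc j)) = 2 * real (Suc j) * mom j"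
proof (cases "even j")
  case True
  then obtain m where j: "j = 2*m" by (auto elim: evenE)
  have "Suc (Suc j) = 2 * Suc m" using j by simp
  then have "mom (Suc (Suc j)) = fact (2 * Suc m) / fact (Suc m)" using mom_even by metis
  also have "\<dots> = 2 * real (Suc j) * (fact (2*m) / fact m)"
  proof -
    have "fact (2 * Suc m) = (2*real m+2)*(2*real m+1) * (fact (2*m)::real)"
      by (simp add: fact_Suc algebra_simps)
    moreover have "fact (Suc m) = (real m + 1) * (fact m :: real)" by (simp add: fact_Suc)
    moreover have aux: "\<And>x y F G::real. x \<noteq> 0 \<Longrightarrow> G \<noteq> 0 \<Longrightarrow> (2*x*y*F)/(x*G) = 2*y*(F/G)"
      by (simp add: field_simps)
    ultimately have "fact (2 * Suc m) / fact (Suc m) = 2*(2*real m+1)*(fact (2*m)/(fact m::real))"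
      using aux[of "real m + 1" "fact m" "2*real m+1" "fact (2*m)"] by (simp add: algebra_simps)
    then show ?thesis unfolding j by simp
  qed
  finally show ?thesis using mom_even j by simp
next
  case False
  then obtain m where j: "j = 2*m+1" by (auto elim: oddE)
  have "Suc (Suc j) = 2 * Suc m + 1" using j by simp
  then show ?thesis using mom_odd[of "Suc m"] mom_odd[of m] j by simp
qed

lemma mom_1: "mom (Suc 0) = 0" using mom_odd[of 0] by simp

definition Lf :: "real poly \<Rightarrow> real" where "Lf F = (\<integral>z. poly F z * rho0 z \<partial>lborel)"

lemma poly_sum_le: "degree (p::'a::comm_semiring_1 poly) \<le> N \<Longrightarrow> poly p x = (\<Sum>i\<le>N. coeff p i * x ^ i)"
  unfolding poly_altdef
  by (rule sum.mono_neutral_left) (auto simp: coeff_eq_0)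

lemma Lf_int: "integrable lborel (\<lambda>z. poly F z * rho0 z)"
proof -
  have "(\<lambda>z. poly F z * rho0 z) = (\<lambda>z. \<Sum>i\<le>degree F. coeff F i * (rho0 z * z ^ i))"
    by (auto simp: poly_altdef sum_distrib_right sum_distrib_left mult_ac)
  moreover have "integrable lborel (\<lambda>z. \<Sum>i\<le>degree F. coeff F i * (rho0 z * z ^ i))"
    by (auto intro!: Bochner_Integration.integrable_sum integrable_mult_right rho0_mom_int)
  ultimately show ?thesis by simp
qed

lemma Lf_sum: "degree F \<le> N \<Longrightarrow> Lf F = (\<Sum>i\<le>N. coeff F i * mom i)"
proof -
  assume d: "degree F \<le> N"
  have "(\<lambda>z. poly F z * rho0 z) = (\<lambda>z. \<Sum>i\<le>N. coeff F i * (rho0 z * z ^ i))"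
    using d by (auto simp: poly_sum_le[OF d] sum_distrib_right sum_distrib_left mult_ac)
  then show ?thesis unfolding Lf_def mom_def
    by (simp add: integral_sum rho0_mom_int)
qed

lemma Lf_add: "Lf (F + G) = Lf F + Lf G"
  unfolding Lf_def by (simp add: distrib_right Lf_int)
lemma Lf_diff: "Lf (F - G) = Lf F - Lf G"
  unfolding Lf_def by (simp add: left_diff_distrib Lf_int)
lemma Lf_smult: "Lf (smult c F) = c * Lf F"
  unfolding Lf_def by (simp add: mult.assoc)

lemma Lf_ibp: "Lf (pCons 0 F) = 2 * Lf (pderiv F)"
proof -
  define d where "d = degree F"
  have "Lf (pCons 0 F) = (\<Sum>i\<le>Suc d. coeff (pCons 0 F) i * mom i)"
    by (rule Lf_sum) (simp add: d_def degree_pCons_le)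
  also have "\<dots> = (\<Sum>i\<le>d. coeff F i * mom (Suc i))"
    by (subst sum.atMost_Suc_shift) simp
  also have "\<dots> = (\<Sum>i\<le>Suc d. coeff F i * mom (Suc i))"
    by (simp add: d_def coeff_eq_0)
  also have "\<dots> = (\<Sum>i\<le>d. coeff F (Suc i) * mom (Suc (Suc i)))"
    by (subst sum.atMost_Suc_shift) (simp add: mom_1)
  also have "\<dots> = 2 * (\<Sum>i\<le>d. coeff (pderiv F) i * mom i)"
    by (simp add: sum_distrib_left coeff_pderiv mom_rec algebra_simps)
  also have "(\<Sum>i\<le>d. coeff (pderiv F) i * mom i) = Lf (pderiv F)"
    by (rule Lf_sum[symmetric]) (simp add: d_def degree_pderiv)
  finally show ?thesis .
qed

fun hp :: "nat \<Rightarrow> real poly" where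
  "hp 0 = 1"
| "hp (Suc n) = pCons 0 (hp n) - smult 2 (pderiv (hp n))"

definition Tm :: "nat \<Rightarrow> nat \<Rightarrow> real" where "Tm j n = Lf (monom 1 j * hp n)"

lemma Tm_rec: "Tm j (Suc n) = 2 * real j * Tm (j - 1) n"
proof -
  have "monom 1 j * hp (Suc n) = pCons 0 (monom 1 j * hp n) - smult 2 (monom 1 j * pderiv (hp n))"
    by (simp add: algebra_simps)
  then have "Tm j (Suc n) = 2 * Lf (pderiv (monom 1 j * hp n)) - 2 * Lf (monom 1 j * pderiv (hp n))"
    unfolding Tm_def by (simp add: Lf_diff Lf_smult Lf_ibp)
  also have "pderiv (monom 1 j * hp n) = monom 1 j * pderiv (hp n) + smult (real j) (monom 1 (j - 1) * hp n)"
  proof -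
    have "monom (real j) (j-1) = smult (real j) (monom 1 (j-1))" by (simp add: smult_monom)
    then show ?thesis by (simp add: pderiv_mult pderiv_monom algebra_simps)
  qed
  finally show ?thesis unfolding Tm_def by (simp add: Lf_add Lf_smult algebra_simps)
qed

lemma Tm_orth: "j < n \<Longrightarrow> Tm j n = 0"
proof (induction n arbitrary: j)
  case 0 then show ?case by simp
next
  case (Suc n)
  show ?case
  proof (cases j)
    case 0 then show ?thesis by (simp add: Tm_rec)
  next
    case (Suc j') then show ?thesis using Suc.IH[of j'] Suc.prems by (simp add: Tm_rec)
  qed
qed

lemma Tm_diag: "Tm n n = 2 ^ n * fact n"
proof (induction n)
  case 0 then show ?case by (simp add: Tm_def Lf_def rho0_def)
next
  case (Suc n) then show ?case by (simp add: Tm_rec)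
qed

definition acoef :: "nat \<Rightarrow> nat \<Rightarrow> real" where
  "acoef n i = (if i \<le> n \<and> even (n - i) then (-1)^((n-i) div 2) * fact n / (fact ((n-i) div 2) * fact i) else 0)"

lemma acoef_aux:
  fixes x y S F A B :: real
  assumes "x \<ge> 0" "y \<ge> 0" "A \<noteq> 0" "B \<noteq> 0"
  shows "- S * ((x + 2*y + 3) * F) / ((y + 1) * A * ((x + 1) * B)) =
    - S * F / ((y + 1) * A * B) - 2 * (x + 2) * (S * F / (A * ((x + 2) * (x + 1) * B)))"
proof -
  have "x + 1 \<noteq> 0" "y + 1 \<noteq> 0" "x + 2 \<noteq> 0" using assms by auto
  then show ?thesis using assms by (simp add: divide_simps) (simp add: algebra_simps)
qed

lemma acoef_rec:
  "acoef (Suc n) i = (case i of 0 \<Rightarrow> 0 | Suc j \<Rightarrow> acoef n j) - 2 * real (Suc i) * acoef n (Suc i)"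
proof (cases "i \<le> Suc n \<and> even (Suc n - i)")
  case False
  have 1: "acoef (Suc n) i = 0" using False by (simp add: acoef_def)
  have 2: "acoef n (Suc i) = 0"
  proof (cases "Suc i \<le> n")
    case True
    then have "n - Suc i + 2 = Suc n - i" by simp
    moreover have "odd (Suc n - i)" using False True by auto
    ultimately have "odd (n - Suc i + 2)" by simp
    then have "odd (n - Suc i)" by simp
    then show ?thesis by (simp add: acoef_def)
  qed (simp add: acoef_def)
  have 3: "(case i of 0 \<Rightarrow> 0 | Suc j \<Rightarrow> acoef n j) = 0"
    using False by (cases i) (auto simp: acoef_def)
  show ?thesis using 1 2 3 by simp
next
  case True
  then obtain l where l: "Suc n = i + 2*l"
    by (metis evenE le_add_diff_inverse)
  show ?thesis
  proof (cases l)
    case 0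
    then have i: "i = Suc n" using l by simp
    show ?thesis by (simp add: i acoef_def)
  next
    case (Suc l')
    have n: "n = i + 2*l' + 1" using l Suc by simp
    have a2: "acoef n (Suc i) = (-1)^l' * fact n / (fact l' * fact (Suc i))"
      by (simp add: acoef_def n)
    have lhs: "acoef (Suc n) i = (-1)^(Suc l') * fact (Suc n) / (fact (Suc l') * fact i)"
      using l Suc by (simp add: acoef_def)
    show ?thesis
    proof (cases i)
      case 0
      have e1: "fact (Suc n) = (2*real l' + 2) * (fact n :: real)" using n 0 by (simp add: fact_Suc)
      have e2: "fact (Suc l') = (real l' + 1) * (fact l' :: real)" by (simp add: fact_Suc)
      define S where "S = ((-1::real)^l')"
      have c: "real l' + 1 \<noteq> 0" by simp
      have "acoef (Suc n) 0 = - (((real l'+1)*(2*S*fact n))/((real l'+1)*fact l'))"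
      proof -
        have rn: "real n = 2*real l' + 1" using n 0 by simp
        show ?thesis using lhs e2 unfolding 0 S_def by (simp add: rn algebra_simps minus_divide_left)
      qed
      also have "\<dots> = - ((2*S*fact n)/fact l')" using c by (subst mult_divide_mult_cancel_left) simp_all
      also have "\<dots> = -(2*acoef n (Suc 0))" using a2 unfolding 0 S_def by simp
      finally show ?thesis using 0 by simp
    next
      case (Suc j)
      have a1: "acoef n j = (-1)^(Suc l') * fact n / (fact (Suc l') * fact j)"
      proof -
        have "n - j = 2 * Suc l'" using n Suc by simp
        moreover have "j \<le> n" using n Suc by simp
        ultimately show ?thesis by (simp add: acoef_def)
      qed
      have e1: "fact (Suc n) = (real j + 2*real l' + 3) * (fact n :: real)" using n Suc by (simp add: fact_Suc)
      have e2: "fact (Suc l') = (real l' + 1) * (fact l' :: real)" by (simp add: fact_Suc)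
      have e3: "fact (Suc j) = (real j + 1) * (fact j :: real)" by (simp add: fact_Suc)
      have e4: "fact (Suc (Suc j)) = (real j + 2) * (real j + 1) * (fact j :: real)" by (simp add: fact_Suc algebra_simps)
      have fz: "(fact l' :: real) \<noteq> 0" "(fact j :: real) \<noteq> 0" "(fact n :: real) \<noteq> 0" by simp_all
      have sgn: "((-1::real)^(Suc l')) = - ((-1)^l')" by simp
      define S where "S = ((-1::real)^l')"
      have "acoef (Suc n) i = - S * ((real j + 2*real l' + 3) * fact n) / ((real l' + 1) * fact l' * ((real j + 1) * fact j))"
        using lhs unfolding Suc e1 e2 e3 sgn S_def by simp
      moreover have "acoef n j = - S * fact n / ((real l' + 1) * fact l' * fact j)"
        using a1 unfolding e2 sgn S_def by simp
      moreover have "acoef n (Suc i) = S * fact n / (fact l' * ((real j + 2) * (real j + 1) * fact j))"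
        using a2 unfolding Suc e4 S_def by simp
      ultimately show ?thesis using fz acoef_aux[of "real j" "real l'" "fact l'" "fact j" S "fact n"] unfolding Suc
        by simp
    qed
  qed
qed

lemma coeff_hp: "coeff (hp n) i = acoef n i"
proof (induction n arbitrary: i)
  case 0
  then show ?case by (cases i) (auto simp: acoef_def)
next
  case (Suc n)
  show ?case
    by (simp add: acoef_rec coeff_pCons coeff_pderiv Suc.IH split: nat.split)
qed

lemma degree_hp: "degree (hp n) \<le> n"
  by (rule degree_le) (simp add: coeff_hp acoef_def)

lemma coeff_hp_top: "coeff (hp n) n = 1"
  by (simp add: coeff_hp acoef_def)

definition hr :: "nat \<Rightarrow> real \<Rightarrow> real" where "hr n z = (\<Sum>i\<le>n. acoef n i * z ^ i)"

lemma poly_hp: "poly (hp n) z = hr n z"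
  unfolding hr_def by (simp add: poly_sum_le[OF degree_hp] coeff_hp)

lemma Ifun_0: "Ifun k 0 = 1" by (simp add: Ifun_def)

lemma hr_Hpol: "hr n z = Hpol k n 0 z"
proof -
  define g where "g i = acoef n i * z ^ i" for i
  have "hr n z = sum g ((\<lambda>l. n - 2*l) ` {0..n div 2})"
    unfolding hr_def g_def[symmetric]
  proof (rule sum.mono_neutral_right)
    show "(\<lambda>l. n - 2*l) ` {0..n div 2} \<subseteq> {..n}" by auto
    show "\<forall>i\<in>{..n} - (\<lambda>l. n - 2*l) ` {0..n div 2}. g i = 0"
    proof
      fix i assume i: "i \<in> {..n} - (\<lambda>l. n - 2*l) ` {0..n div 2}"
      have "odd (n - i)"
      proof
        assume "even (n - i)"
        then obtain l where "n - i = 2*l" by (rule evenE)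
        then have "i = n - 2*l" "l \<in> {0..n div 2}" using i by auto
        then show False using i by auto
      qed
      then show "g i = 0" by (simp add: g_def acoef_def)
    qed
  qed simp
  also have "\<dots> = sum (g \<circ> (\<lambda>l. n - 2*l)) {0..n div 2}"
    by (rule sum.reindex) (auto simp: inj_on_def)
  also have "\<dots> = Hpol k n 0 z"
    unfolding Hpol_def Ifun_0
  proof (rule sum.cong)
    fix l assume l: "l \<in> {0..n div 2}"
    then have "n - (n - 2*l) = 2*l" "n - 2*l \<le> n" by auto
    then show "(g \<circ> (\<lambda>l. n - 2*l)) l = fact n / (fact l * fact (n - 2 * l)) * (- 1 / 1\<^sup>2) ^ l * z ^ (n - 2 * l)"
      by (simp add: g_def acoef_def)
  qed simp
  finally show ?thesis .
qed

lemma hr_orth: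
  assumes "m \<le> n"
  shows "(\<integral>z. (\<Sum>j<m. d j * z ^ j) * hr n z * rho0 z \<partial>lborel) = 0"
proof -
  have "(\<lambda>z. (\<Sum>j<m. d j * z ^ j) * hr n z * rho0 z) = (\<lambda>z. \<Sum>j<m. d j * (poly (monom 1 j * hp n) z * rho0 z))"
    by (simp add: sum_distrib_right sum_distrib_left poly_hp poly_monom mult_ac)
  then have "(\<integral>z. (\<Sum>j<m. d j * z ^ j) * hr n z * rho0 z \<partial>lborel) = (\<Sum>j<m. d j * Tm j n)"
    apply (simp only:)
    apply (subst Bochner_Integration.integral_sum)
     apply (rule integrable_mult_right, rule Lf_int)
    apply (simp only: integral_mult_right_zero Tm_def Lf_def)
    done
  also have "\<dots> = 0" using assms by (simp add: Tm_orth)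
  finally show ?thesis .
qed

lemma hr_norm: "(\<integral>z. hr n z * hr n z * rho0 z \<partial>lborel) = 2 ^ n * fact n"
proof -
  have "(\<lambda>z. hr n z * hr n z * rho0 z) = (\<lambda>z. \<Sum>i\<le>n. acoef n i * (poly (monom 1 i * hp n) z * rho0 z))"
  proof
    fix z
    have "hr n z * hr n z * rho0 z = (\<Sum>i\<le>n. acoef n i * z ^ i) * poly (hp n) z * rho0 z"
      by (simp add: hr_def[of n] poly_hp)
    then show "hr n z * hr n z * rho0 z = (\<Sum>i\<le>n. acoef n i * (poly (monom 1 i * hp n) z * rho0 z))"
      by (simp add: sum_distrib_right sum_distrib_left poly_monom mult_ac)
  qed
  then have "(\<integral>z. hr n z * hr n z * rho0 z \<partial>lborel) = (\<Sum>i\<le>n. acoef n i * Tm i n)"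
    apply (simp only:)
    apply (subst Bochner_Integration.integral_sum)
     apply (rule integrable_mult_right, rule Lf_int)
    apply (simp only: integral_mult_right_zero Tm_def Lf_def)
    done
  also have "\<dots> = acoef n n * Tm n n"
  proof -
    have "(\<Sum>i<n. acoef n i * Tm i n) = 0" by (rule sum.neutral) (simp add: Tm_orth)
    then show ?thesis by (simp add: lessThan_Suc_atMost[symmetric])
  qed
  also have "\<dots> = 2 ^ n * fact n" by (simp add: Tm_diag acoef_def)
  finally show ?thesis .
qed


lemma cauchy_coeff:
  fixes f :: "complex \<Rightarrow> complex"
  assumes holf: "f holomorphic_on ball 0 R" and r: "0 < r" "r < R"
    and B: "\<And>w. norm w \<le> r \<Longrightarrow> norm (f w) \<le> B"
  shows "norm ((deriv ^^ j) f 0 / fact j) \<le> B / r ^ j"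
proof -
  have "norm ((deriv ^^ j) f 0) \<le> fact j * B / r ^ j"
  proof (rule Cauchy_inequality)
    show "f holomorphic_on ball 0 r" using r by (intro holomorphic_on_subset[OF holf]) auto
    show "continuous_on (cball 0 r) f"
      by (rule continuous_on_subset[OF holomorphic_on_imp_continuous_on[OF holf]]) (use r in auto)
  qed (use r B in auto)
  then show ?thesis by (simp add: norm_divide field_simps)
qed

lemma cauchy_taylor:
  fixes f :: "complex \<Rightarrow> complex"
  assumes holf: "f holomorphic_on ball 0 R" and r: "0 < r" "r < R"
    and B: "\<And>w. norm w \<le> r \<Longrightarrow> norm (f w) \<le> B"
    and z: "norm z \<le> r / 2"
  shows "norm (f z - (\<Sum>j<n. (deriv ^^ j) f 0 / fact j * z ^ j)) \<le> 2 * B * (norm z / r) ^ n"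
proof -
  define c where "c j = (deriv ^^ j) f 0 / fact j" for j
  have cb: "norm (c j) \<le> B / r ^ j" for j unfolding c_def by (rule cauchy_coeff[OF holf r B])
  have B0: "0 \<le> B" using B[of 0] r by (simp add: order_trans[OF norm_ge_zero])
  have zR: "z \<in> ball 0 R" using z r by auto
  have sums: "(\<lambda>j. c j * z ^ j) sums f z"
    using holomorphic_power_series[OF holf zR] by (simp add: c_def)
  define t where "t = norm z / r"
  have t: "0 \<le> t" "t \<le> 1/2" using z r by (auto simp: t_def field_simps)
  have tb: "norm (c j * z ^ j) \<le> B * t ^ j" for j
  proof -
    have "norm (c j * z ^ j) = norm (c j) * norm z ^ j" by (simp add: norm_mult norm_power)
    also have "\<dots> \<le> B / r ^ j * norm z ^ j" by (rule mult_right_mono[OF cb]) simp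
    also have "\<dots> = B * t ^ j" by (simp add: t_def power_divide)
    finally show ?thesis .
  qed
  have gs: "summable (\<lambda>j. B * t ^ j)" using t by (intro summable_mult summable_geometric) auto
  have sr: "(\<lambda>j. c (j + n) * z ^ (j + n)) sums (f z - (\<Sum>j<n. c j * z ^ j))"
    using sums_split_initial_segment[OF sums, of n] by simp
  have "norm (f z - (\<Sum>j<n. c j * z ^ j)) \<le> (\<Sum>j. B * t ^ n * t ^ j)"
    unfolding sums_unique[OF sr]
  proof (rule norm_suminf_le)
    show "norm (c (j + n) * z ^ (j + n)) \<le> B * t ^ n * t ^ j" for j
      using tb[of "j+n"] by (simp add: power_add mult_ac)
    show "summable (\<lambda>j. B * t ^ n * t ^ j)" using t by (intro summable_mult summable_geometric) auto
  qed
  also have "\<dots> = B * t ^ n * (1 / (1 - t))"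
    using t by (subst suminf_mult) (auto intro: summable_geometric simp: suminf_geometric)
  also have "\<dots> \<le> B * t ^ n * 2"
    using t B0 by (intro mult_left_mono) (auto simp: field_simps)
  finally show ?thesis by (simp add: c_def t_def mult_ac)
qed


lemma pm1: "0 \<le> (x::real) \<Longrightarrow> x * x powr (p - 1) = x powr p"
  using powr_mult_base[of x "p - 1"] by simp

lemma pow_lip:
  fixes p s t :: real
  assumes p: "p \<ge> 1" and s: "0 \<le> s" "s \<le> t"
  shows "t powr p - s powr p \<le> p * (t - s) * t powr (p - 1)"
proof (cases "s = 0")
  case True
  have "t powr p = t * t powr (p - 1)"
    using s by (simp add: pm1)
  also have "\<dots> \<le> p * t * t powr (p - 1)"
  proof -
    have "1 * t \<le> p * t" by (rule mult_right_mono) (use p s in auto)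
    then show ?thesis by (intro mult_right_mono) auto
  qed
  finally show ?thesis using True p by simp
next
  case False
  then have s0: "s > 0" using s by simp
  show ?thesis
  proof (cases "s = t")
    case False
    then have st: "s < t" using s by simp
    have d: "\<And>x. s \<le> x \<Longrightarrow> x \<le> t \<Longrightarrow> ((\<lambda>x. x powr p) has_real_derivative p * x powr (p-1)) (at x)"
      using s0 by (intro has_real_derivative_powr) auto
    obtain z where z: "s < z" "z < t" "t powr p - s powr p = (t - s) * (p * z powr (p - 1))"
      using MVT2[OF st d] by blast
    have "z powr (p - 1) \<le> t powr (p - 1)" using z s0 p by (intro powr_mono2) auto
    then have "(t - s) * (p * z powr (p - 1)) \<le> (t - s) * (p * t powr (p - 1))"
      using st p by (intro mult_left_mono) auto
    then show ?thesis using z by (simp add: mult_ac)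
  qed simp
qed

definition psi :: "real \<Rightarrow> real \<Rightarrow> real" where "psi p t = \<bar>t\<bar> powr (p - 1) * t"

lemma psi_pos: "0 \<le> t \<Longrightarrow> psi p t = t powr p"
  unfolding psi_def by (simp add: pm1 mult.commute)

lemma psi_neg: "t \<le> 0 \<Longrightarrow> psi p t = - ((-t) powr p)"
  unfolding psi_def using pm1[of "-t" p] by (simp add: mult.commute)

lemma psi_lip_le:
  fixes p s t :: real
  assumes p: "p \<ge> 1" and st: "s \<le> t"
  shows "\<bar>psi p t - psi p s\<bar> \<le> p * \<bar>t - s\<bar> * (\<bar>t\<bar> + \<bar>s\<bar>) powr (p - 1)"
proof -
  have mono: "(a::real) powr (p-1) \<le> (\<bar>t\<bar> + \<bar>s\<bar>) powr (p - 1)" if "0 \<le> a" "a \<le> \<bar>t\<bar> + \<bar>s\<bar>" for a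
    using that p by (intro powr_mono2) auto
  consider "0 \<le> s" | "t \<le> 0" | "s < 0" "0 < t" by linarith
  then show ?thesis
  proof cases
    case 1
    have "t powr p - s powr p \<le> p * (t - s) * t powr (p - 1)" by (rule pow_lip[OF p 1 st])
    also have "\<dots> \<le> p * (t - s) * (\<bar>t\<bar> + \<bar>s\<bar>) powr (p - 1)"
      using p st 1 by (intro mult_left_mono mono) auto
    moreover have "s powr p \<le> t powr p" using 1 st p by (intro powr_mono2) auto
    ultimately show ?thesis using 1 st by (simp add: psi_pos)
  next
    case 2
    have "(-s) powr p - (-t) powr p \<le> p * (t - s) * (-s) powr (p - 1)"
      using pow_lip[OF p, of "-t" "-s"] 2 st by simp
    also have "\<dots> \<le> p * (t - s) * (\<bar>t\<bar> + \<bar>s\<bar>) powr (p - 1)"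
      using p st 2 by (intro mult_left_mono mono) auto
    moreover have "(-t) powr p \<le> (-s) powr p" using 2 st p by (intro powr_mono2) auto
    ultimately show ?thesis using 2 st by (simp add: psi_neg)
  next
    case 3
    have "psi p t - psi p s = t * t powr (p-1) + (-s) * (-s) powr (p-1)"
      using 3 pm1[of t p] pm1[of "-s" p] by (simp add: psi_pos psi_neg)
    also have "\<dots> \<le> t * (\<bar>t\<bar> + \<bar>s\<bar>) powr (p - 1) + (-s) * (\<bar>t\<bar> + \<bar>s\<bar>) powr (p - 1)"
      using 3 by (intro add_mono mult_left_mono mono) auto
    also have "\<dots> = 1 * \<bar>t - s\<bar> * (\<bar>t\<bar> + \<bar>s\<bar>) powr (p - 1)" using 3 by (simp add: algebra_simps)
    also have "\<dots> \<le> p * \<bar>t - s\<bar> * (\<bar>t\<bar> + \<bar>s\<bar>) powr (p - 1)"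
      using p by (intro mult_right_mono) auto
    finally show ?thesis using 3 by (simp add: psi_pos psi_neg)
  qed
qed

lemma psi_lip:
  fixes p s t :: real
  assumes p: "p \<ge> 1"
  shows "\<bar>psi p t - psi p s\<bar> \<le> p * \<bar>t - s\<bar> * (\<bar>t\<bar> + \<bar>s\<bar>) powr (p - 1)"
proof (cases "s \<le> t")
  case True then show ?thesis using psi_lip_le[OF p] by blast
next
  case False
  then have "\<bar>psi p s - psi p t\<bar> \<le> p * \<bar>s - t\<bar> * (\<bar>s\<bar> + \<bar>t\<bar>) powr (p - 1)"
    using psi_lip_le[OF p] by simp
  then show ?thesis by (simp add: abs_minus_commute add.commute)
qed

definition Nr :: "real \<Rightarrow> real \<Rightarrow> real" where
  "Nr p x = \<bar>1 + x\<bar> powr (p - 1) * (1 + x) - 1 - p * x"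

lemma Nr_psi: "Nr p x = psi p (1 + x) - 1 - p * x"
  by (simp add: Nr_def psi_def)

lemma ceil_ge: "(p::real) > 1 \<Longrightarrow> p \<le> real (nat \<lceil>p\<rceil>) \<and> 1 \<le> nat \<lceil>p\<rceil>"
proof -
  assume p: "p > 1"
  have c: "p \<le> of_int \<lceil>p\<rceil>" by (rule le_of_int_ceiling)
  then have "\<lceil>p\<rceil> \<ge> 1" using p by linarith
  then have "real (nat \<lceil>p\<rceil>) = of_int \<lceil>p\<rceil>" by simp
  then show ?thesis using c \<open>\<lceil>p\<rceil> \<ge> 1\<close> by linarith
qed

lemma powr_le_pow: "1 \<le> (X::real) \<Longrightarrow> a \<le> real N \<Longrightarrow> X powr a \<le> X ^ N"
  using powr_mono[of a "real N" X] by (simp add: powr_realpow)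

lemma Nr_lip:
  fixes p a c :: real
  assumes p: "p > 1"
  shows "\<bar>Nr p (a + c) - Nr p a\<bar> \<le> p * (2 ^ nat \<lceil>p\<rceil> + 1) * \<bar>c\<bar> * (1 + \<bar>a\<bar> + \<bar>c\<bar>) ^ nat \<lceil>p\<rceil>"
proof -
  define N where "N = nat \<lceil>p\<rceil>"
  define X where "X = 1 + \<bar>a\<bar> + \<bar>c\<bar>"
  have X1: "1 \<le> X" by (simp add: X_def)
  have "\<bar>Nr p (a + c) - Nr p a\<bar> = \<bar>(psi p (1 + a + c) - psi p (1 + a)) - p * c\<bar>"
    by (simp add: Nr_psi algebra_simps)
  also have "\<dots> \<le> \<bar>psi p (1 + a + c) - psi p (1 + a)\<bar> + p * \<bar>c\<bar>"
    using p by (intro order_trans[OF abs_triangle_ineq4]) (simp add: abs_mult)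
  also have "\<bar>psi p (1 + a + c) - psi p (1 + a)\<bar> \<le> p * \<bar>c\<bar> * (\<bar>1 + a + c\<bar> + \<bar>1 + a\<bar>) powr (p - 1)"
    using psi_lip[of p "1 + a + c" "1 + a"] p by simp
  also have "(\<bar>1 + a + c\<bar> + \<bar>1 + a\<bar>) powr (p - 1) \<le> (2 * X) powr (p - 1)"
    using p by (intro powr_mono2) (auto simp: X_def)
  also have "\<dots> \<le> (2 * X) ^ N"
    apply (intro powr_le_pow) using X1 apply simp using ceil_ge[OF p] unfolding N_def by linarith
  finally have "\<bar>Nr p (a + c) - Nr p a\<bar> \<le> p * \<bar>c\<bar> * (2 * X) ^ N + p * \<bar>c\<bar>"
    using p by (simp add: mult_left_mono)
  also have "\<dots> \<le> p * (2 ^ N + 1) * \<bar>c\<bar> * X ^ N"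
  proof -
    have "p * \<bar>c\<bar> * 1 \<le> p * \<bar>c\<bar> * X ^ N" using X1 p
      by (intro mult_left_mono) (auto simp: one_le_power)
    then show ?thesis by (simp add: power_mult_distrib algebra_simps)
  qed
  finally show ?thesis by (simp add: N_def X_def)
qed

lemma Nr_crude:
  fixes p x :: real
  assumes p: "p > 1"
  shows "\<bar>Nr p x\<bar> \<le> (2 + p) * (1 + \<bar>x\<bar>) ^ nat \<lceil>p\<rceil>"
proof -
  define N where "N = nat \<lceil>p\<rceil>"
  have X1: "1 \<le> 1 + \<bar>x\<bar>" by simp
  have XN: "1 \<le> (1 + \<bar>x\<bar>) ^ N" by (simp add: one_le_power)
  have "\<bar>psi p (1 + x)\<bar> = \<bar>1 + x\<bar> powr p"
    unfolding psi_def by (simp add: abs_mult pm1 mult.commute)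
  also have "\<dots> \<le> (1 + \<bar>x\<bar>) powr p" using p by (intro powr_mono2) auto
  also have "\<dots> \<le> (1 + \<bar>x\<bar>) ^ N" using p ceil_ge[OF p] by (intro powr_le_pow) (auto simp: N_def)
  finally have 1: "\<bar>psi p (1 + x)\<bar> \<le> (1 + \<bar>x\<bar>) ^ N" .
  have 2: "1 + p * \<bar>x\<bar> \<le> (1 + p) * (1 + \<bar>x\<bar>) ^ N"
  proof -
    have "1 + p * \<bar>x\<bar> \<le> (1 + p) * (1 + \<bar>x\<bar>)" using p by (simp add: algebra_simps)
    also have "\<dots> \<le> (1 + p) * (1 + \<bar>x\<bar>) ^ N"
    proof -
      have "N \<ge> 1" using ceil_ge[OF p] by (simp add: N_def)
      then have "(1 + \<bar>x\<bar>) ^ 1 \<le> (1 + \<bar>x\<bar>) ^ N" by (intro power_increasing) auto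
      then show ?thesis using p by (intro mult_left_mono) auto
    qed
    finally show ?thesis .
  qed
  have "\<bar>Nr p x\<bar> \<le> \<bar>psi p (1 + x)\<bar> + 1 + p * \<bar>x\<bar>"
    unfolding Nr_psi using p abs_triangle_ineq4[of "psi p (1+x) - 1" "p*x"] abs_triangle_ineq4[of "psi p (1+x)" 1]
    by (simp add: abs_mult)
  also have "\<dots> \<le> (2 + p) * (1 + \<bar>x\<bar>) ^ N" using 1 2 by (simp add: algebra_simps)
  finally show ?thesis by (simp add: N_def)
qed


definition gc :: "real \<Rightarrow> complex \<Rightarrow> complex" where
  "gc p x = (1 + x) powr (of_real p) - 1 - of_real p * x"

lemma gc_real:
  assumes "\<bar>x\<bar> < 1"
  shows "gc p (of_real x) = of_real (Nr p x)"
proof -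
  have "1 + complex_of_real x = of_real (1 + x)" by simp
  then have "(1 + complex_of_real x) powr of_real p = of_real ((1 + x) powr p)"
    using assms by (simp only: powr_of_real)
  moreover have "\<bar>1 + x\<bar> powr (p - 1) * (1 + x) = (1 + x) powr p"
    using assms pm1[of "1 + x" p] by (simp add: mult.commute)
  ultimately show ?thesis by (simp add: gc_def Nr_def)
qed

lemma not_nonpos: "norm (x::complex) < 1 \<Longrightarrow> 1 + x \<notin> \<real>\<^sub>\<le>\<^sub>0"
proof
  assume "norm x < 1" "1 + x \<in> \<real>\<^sub>\<le>\<^sub>0"
  then have "Re (1 + x) \<le> 0" by (simp add: complex_nonpos_Reals_iff)
  moreover have "\<bar>Re x\<bar> < 1" using abs_Re_le_cmod[of x] \<open>norm x < 1\<close> by linarith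
  ultimately show False by simp
qed

lemma gc_holo_comp:
  assumes "X holomorphic_on S" "\<And>w. w \<in> S \<Longrightarrow> norm (X w) < 1"
  shows "(\<lambda>w. gc p (X w)) holomorphic_on S"
  unfolding gc_def using assms not_nonpos by (intro holomorphic_intros) auto

lemma gc_holo: "gc p holomorphic_on ball 0 1"
  using gc_holo_comp[of "\<lambda>x. x" "ball 0 1" p] by (simp add: holomorphic_on_ident)

lemma gc_0: "gc p 0 = 0" by (simp add: gc_def)

lemma gc_deriv0: "deriv (gc p) 0 = 0"
proof -
  have d1: "((\<lambda>z. z powr of_real p) has_field_derivative of_real p) (at (1::complex))"
    using has_field_derivative_powr[of 1 "of_real p"] by simp
  have d2: "((\<lambda>x::complex. 1 + x) has_field_derivative 1) (at 0)" by (auto intro!: derivative_eq_intros)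
  have "((\<lambda>x::complex. (\<lambda>z. z powr of_real p) ((\<lambda>x. 1 + x) x)) has_field_derivative of_real p * 1) (at 0)"
    by (rule DERIV_chain2[of "\<lambda>z. z powr of_real p" _ "\<lambda>x. 1 + x"]) (use d1 d2 in simp_all)
  then have "(gc p has_field_derivative (of_real p - of_real p)) (at 0)"
    unfolding gc_def[abs_def] by (auto intro!: derivative_eq_intros)
  then show ?thesis by (simp add: DERIV_imp_deriv)
qed

lemma gc_bound:
  assumes p: "p > 1" and x: "norm x \<le> 1/4"
  shows "norm (gc p x) \<le> 8 * (2 powr p + 1 + p) * norm x ^ 2"
proof -
  define B where "B = 2 powr p + 1 + p"
  have Bb: "norm (gc p w) \<le> B" if w: "norm w \<le> 1/2" for w
  proof -
    have "norm ((1 + w) powr of_real p) = norm (1 + w) powr p"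
      by (simp add: norm_powr_real_powr')
    also have "\<dots> \<le> 2 powr p"
    proof (rule powr_mono2)
      show "norm (1 + w) \<le> 2" using w norm_triangle_ineq[of 1 w] by simp
    qed (use p in auto)
    finally have 1: "norm ((1 + w) powr of_real p) \<le> 2 powr p" .
    have "norm (gc p w) \<le> norm ((1 + w) powr of_real p) + 1 + p * norm w"
    proof -
      have "norm (gc p w) \<le> norm ((1 + w) powr of_real p - 1) + norm (of_real p * w)"
        unfolding gc_def by (rule norm_triangle_ineq4)
      also have "norm ((1 + w) powr of_real p - 1) \<le> norm ((1 + w) powr of_real p) + 1"
        using norm_triangle_ineq4[of "(1 + w) powr of_real p" 1] by simp
      also have "norm (complex_of_real p * w) = p * norm w" using p by (simp add: norm_mult)
      finally show ?thesis by simp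
    qed
    also have "\<dots> \<le> B"
    proof -
      have "p * norm w \<le> p * 1" using w p by (intro mult_left_mono) auto
      then show ?thesis using 1 by (simp add: B_def)
    qed
    finally show ?thesis .
  qed
  have "norm (gc p x - (\<Sum>j<2. (deriv ^^ j) (gc p) 0 / fact j * x ^ j)) \<le> 2 * B * (norm x / (1/2)) ^ 2"
    by (rule cauchy_taylor[OF gc_holo, of "1/2"]) (use Bb x in auto)
  moreover have "(\<Sum>j<2. (deriv ^^ j) (gc p) 0 / fact j * x ^ j) = 0"
    by (simp add: numeral_2_eq_2 gc_0 gc_deriv0)
  ultimately show ?thesis by (simp add: B_def power2_eq_square field_simps)
qed



definition hA :: "nat \<Rightarrow> real" where "hA m = (\<Sum>i\<le>m. \<bar>acoef m i\<bar>)"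

lemma hA_nonneg: "0 \<le> hA m" by (simp add: hA_def sum_nonneg)

definition hc :: "nat \<Rightarrow> complex \<Rightarrow> complex" where
  "hc m w = (\<Sum>i\<le>m. of_real (acoef m i) * w ^ i)"

lemma hc_real: "hc m (of_real z) = of_real (hr m z)"
  by (simp add: hc_def hr_def)

lemma hc_holo[holomorphic_intros]: "(\<lambda>w. hc m w) holomorphic_on S"
  unfolding hc_def by (intro holomorphic_intros)

lemma hc_bound: "norm (hc m w) \<le> hA m * (1 + norm w) ^ m"
proof -
  have "norm (hc m w) \<le> (\<Sum>i\<le>m. norm (of_real (acoef m i) * w ^ i))"
    unfolding hc_def by (rule norm_sum)
  also have "\<dots> \<le> (\<Sum>i\<le>m. \<bar>acoef m i\<bar> * (1 + norm w) ^ m)"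
  proof (rule sum_mono)
    fix i assume i: "i \<in> {..m}"
    have "norm w ^ i \<le> (1 + norm w) ^ i" by (intro power_mono) auto
    also have "\<dots> \<le> (1 + norm w) ^ m" using i by (intro power_increasing) auto
    finally show "norm (of_real (acoef m i) * w ^ i) \<le> \<bar>acoef m i\<bar> * (1 + norm w) ^ m"
      by (simp add: norm_mult norm_power mult_left_mono)
  qed
  finally show ?thesis by (simp add: hA_def sum_distrib_right)
qed

lemma hr_bound: "\<bar>hr m z\<bar> \<le> hA m * (1 + \<bar>z\<bar>) ^ m"
  using hc_bound[of m "of_real z"] by (simp add: hc_real)

lemma hr_cont: "continuous_on UNIV (hr m)"
  unfolding hr_def[abs_def] by (intro continuous_intros)

lemma hr_meas[measurable]: "hr m \<in> borel_measurable borel"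
  using hr_cont by (rule borel_measurable_continuous_onI)

lemma Ifun_pos: "0 < Ifun k s" by (simp add: Ifun_def)

lemma rho_scale: "rho k s y = Ifun k s * rho0 (Ifun k s * y)"
  by (simp add: rho_def rho0_def normal_density_def power_mult_distrib real_sqrt_mult)

lemma int_scale:
  fixes F :: "real \<Rightarrow> real" and I :: real
  assumes I: "I = Ifun k s"
  shows "(\<integral>y. F y * rho k s y \<partial>lborel) = (\<integral>z. F (z / I) * rho0 z \<partial>lborel)"
proof -
  have I0: "I > 0" using I Ifun_pos by simp
  have "(\<integral>y. F y * rho k s y \<partial>lborel) = \<bar>1/I\<bar> *\<^sub>R (\<integral>z. F (0 + 1/I * z) * rho k s (0 + 1/I * z) \<partial>lborel)"
    using I0 by (intro lborel_integral_real_affine) simp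
  also have "(\<lambda>z. F (0 + 1/I * z) * rho k s (0 + 1/I * z)) = (\<lambda>z. I * (F (z/I) * rho0 z))"
    using I0 by (simp add: rho_scale I[symmetric] mult_ac)
  also have "\<bar>1/I\<bar> *\<^sub>R (\<integral>z. I * (F (z/I) * rho0 z) \<partial>lborel) = (\<integral>z. F (z / I) * rho0 z \<partial>lborel)"
    using I0 by (simp only: integral_mult_right_zero) simp
  finally show ?thesis .
qed

lemma Hpol_scale:
  assumes I: "I = Ifun k s"
  shows "Hpol k m s (z / I) = (1 / I) ^ m * hr m z"
proof -
  have I0: "I > 0" using I Ifun_pos by simp
  have "(1 / I) ^ m * hr m z = (1 / I) ^ m * Hpol k m 0 z" by (simp add: hr_Hpol)
  also have "\<dots> = Hpol k m s (z / I)"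
    unfolding Hpol_def sum_distrib_left I[symmetric] Ifun_0
  proof (rule sum.cong[OF refl])
    fix l assume l: "l \<in> {0..m div 2}"
    then have m: "m = (m - 2*l) + 2*l" by auto
    have pw: "(I ^ l)\<^sup>2 = (I\<^sup>2) ^ l" by (simp add: power_mult[symmetric] mult.commute)
    have "(1/I) ^ m * (z ^ (m - 2*l)) = (z / I) ^ (m - 2*l) * (1 / I\<^sup>2) ^ l"
      by (subst m) (simp add: power_add power_divide power_mult field_simps pw)
    then show "(1 / I) ^ m * (fact m / (fact l * fact (m - 2 * l)) * (- 1 / 1\<^sup>2) ^ l * z ^ (m - 2 * l)) =
         fact m / (fact l * fact (m - 2 * l)) * (- 1 / I\<^sup>2) ^ l * (z / I) ^ (m - 2 * l)"
      by (simp add: power_minus' power_divide) (simp add: mult_ac)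
  qed
  finally show ?thesis by simp
qed

lemma weight_int: "integrable lborel (\<lambda>z. (1 + \<bar>z\<bar>) ^ D * rho0 z)"
proof -
  have "(\<lambda>z. (1 + \<bar>z\<bar>) ^ D * rho0 z) = (\<lambda>z. \<Sum>i\<le>D. real (D choose i) * (rho0 z * \<bar>z\<bar> ^ i))"
  proof
    fix z :: real
    have "(1 + \<bar>z\<bar>) ^ D = (\<Sum>i\<le>D. real (D choose i) * \<bar>z\<bar> ^ i)"
      using binomial_ring[of "\<bar>z\<bar>" 1 D] by (simp add: add.commute)
    then show "(1 + \<bar>z\<bar>) ^ D * rho0 z = (\<Sum>i\<le>D. real (D choose i) * (rho0 z * \<bar>z\<bar> ^ i))"
      by (simp add: sum_distrib_right sum_distrib_left mult_ac)
  qed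
  moreover have "integrable lborel (\<lambda>z. \<Sum>i\<le>D. real (D choose i) * (rho0 z * \<bar>z\<bar> ^ i))"
    by (auto intro!: Bochner_Integration.integrable_sum integrable_mult_right rho0_absmom_int)
  ultimately show ?thesis by simp
qed

definition WE :: "nat \<Rightarrow> real" where "WE D = (\<integral>z. (1 + \<bar>z\<bar>) ^ D * rho0 z \<partial>lborel)"

lemma int_bound:
  fixes f :: "real \<Rightarrow> real"
  assumes fm: "f \<in> borel_measurable borel" and fb: "\<And>z. \<bar>f z\<bar> \<le> K * (1 + \<bar>z\<bar>) ^ D"
  shows "integrable lborel (\<lambda>z. f z * hr n z * rho0 z)"
    and "\<bar>\<integral>z. f z * hr n z * rho0 z \<partial>lborel\<bar> \<le> K * hA n * WE (D + n)"
proof -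
  have bnd: "\<bar>f z * hr n z * rho0 z\<bar> \<le> K * hA n * ((1 + \<bar>z\<bar>) ^ (D + n) * rho0 z)" for z
  proof -
    have nn: "0 \<le> K * (1 + \<bar>z\<bar>) ^ D" using fb[of z] by linarith
    have "\<bar>f z * hr n z * rho0 z\<bar> = \<bar>f z\<bar> * \<bar>hr n z\<bar> * rho0 z" by (simp add: abs_mult rho0_nonneg)
    also have "\<dots> \<le> (K * (1 + \<bar>z\<bar>) ^ D) * (hA n * (1 + \<bar>z\<bar>) ^ n) * rho0 z"
      by (intro mult_right_mono mult_mono fb hr_bound rho0_nonneg nn) simp
    finally show ?thesis by (simp add: power_add mult_ac)
  qed
  have gi: "integrable lborel (\<lambda>z. K * hA n * ((1 + \<bar>z\<bar>) ^ (D + n) * rho0 z))"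
    by (intro integrable_mult_right weight_int)
  show i: "integrable lborel (\<lambda>z. f z * hr n z * rho0 z)"
  proof (rule Bochner_Integration.integrable_bound[OF gi])
    show "(\<lambda>z. f z * hr n z * rho0 z) \<in> borel_measurable lborel" using fm by measurable
    show "AE x in lborel. norm (f x * hr n x * rho0 x) \<le> norm (K * hA n * ((1 + \<bar>x\<bar>) ^ (D + n) * rho0 x))"
    proof (rule AE_I2)
      fix x
      have "norm (f x * hr n x * rho0 x) \<le> K * hA n * ((1 + \<bar>x\<bar>) ^ (D + n) * rho0 x)" using bnd[of x] by simp
      also have "\<dots> \<le> norm (K * hA n * ((1 + \<bar>x\<bar>) ^ (D + n) * rho0 x))" by simp
      finally show "norm (f x * hr n x * rho0 x) \<le> norm (K * hA n * ((1 + \<bar>x\<bar>) ^ (D + n) * rho0 x))" .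
    qed
  qed
  have "\<bar>\<integral>z. f z * hr n z * rho0 z \<partial>lborel\<bar> \<le> (\<integral>z. K * hA n * ((1 + \<bar>z\<bar>) ^ (D + n) * rho0 z) \<partial>lborel)"
    by (rule integral_abs_bound_integral[OF i gi bnd])
  also have "\<dots> = K * hA n * WE (D + n)" by (simp add: WE_def)
  finally show "\<bar>\<integral>z. f z * hr n z * rho0 z \<partial>lborel\<bar> \<le> K * hA n * WE (D + n)" .
qed


lemma taylor_real:
  fixes f :: "complex \<Rightarrow> complex" and F G :: "real \<Rightarrow> real"
  assumes holf: "f holomorphic_on ball 0 R" and R: "R > 0"
    and fb: "\<And>w. norm w \<le> R/2 \<Longrightarrow> norm (f w) \<le> B"
    and fr: "\<And>z. \<bar>z\<bar> \<le> R/4 \<Longrightarrow> f (of_real z) = of_real (F z)"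
    and Fb: "\<And>z. \<bar>F z\<bar> \<le> G z"
  shows "\<bar>F z - (\<Sum>j<n. Re ((deriv ^^ j) f 0 / fact j) * z ^ j)\<bar>
           \<le> (real n + 2) * B * (4 * \<bar>z\<bar> / R) ^ n + G z * (4 * \<bar>z\<bar> / R) ^ (n + 2)"
proof -
  define c where "c j = (deriv ^^ j) f 0 / fact j" for j
  define t where "t = 4 * \<bar>z\<bar> / R"
  have t0: "0 \<le> t" using R by (simp add: t_def)
  have B0: "0 \<le> B" using fb[of 0] R by (simp add: order_trans[OF norm_ge_zero])
  have G0: "0 \<le> G z" using Fb[of z] by linarith
  have cb: "norm (c j) \<le> B / (R/2) ^ j" for j
    unfolding c_def by (rule cauchy_coeff[OF holf]) (use R fb in auto)
  have Gt: "0 \<le> G z * t ^ (n + 2)" using G0 t0 by simp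
  have Bt: "0 \<le> B * t ^ n" using B0 t0 by simp
  show ?thesis
  proof (cases "\<bar>z\<bar> \<le> R/4")
    case True
    have zn: "norm (of_real z :: complex) \<le> (R/2) / 2" using True by simp
    have "norm (f (of_real z) - (\<Sum>j<n. c j * (of_real z) ^ j)) \<le> 2 * B * (norm (of_real z :: complex) / (R/2)) ^ n"
      unfolding c_def by (rule cauchy_taylor[OF holf _ _ fb zn]) (use R in auto)
    also have "\<dots> = 2 * B * (t / 2) ^ n" by (simp add: t_def mult.commute)
    also have "\<dots> \<le> 2 * B * t ^ n"
      using B0 t0 by (intro mult_left_mono power_mono) auto
    finally have 1: "norm (f (of_real z) - (\<Sum>j<n. c j * (of_real z) ^ j)) \<le> 2 * B * t ^ n" .
    have "F z - (\<Sum>j<n. Re (c j) * z ^ j) = Re (f (of_real z) - (\<Sum>j<n. c j * (of_real z) ^ j))"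
      using fr[OF True] by (simp add: Re_sum)
    then have "\<bar>F z - (\<Sum>j<n. Re (c j) * z ^ j)\<bar> \<le> 2 * B * t ^ n"
      using 1 abs_Re_le_cmod order_trans by metis
    also have "\<dots> \<le> (real n + 2) * B * t ^ n"
    proof -
      have "2 * (B * t ^ n) \<le> (real n + 2) * (B * t ^ n)" by (rule mult_right_mono) (use Bt in auto)
      then show ?thesis by (simp add: mult.assoc)
    qed
    finally show ?thesis using Gt by (simp add: c_def t_def)
  next
    case False
    then have t1: "1 \<le> t" using R by (simp add: t_def field_simps)
    have "\<bar>\<Sum>j<n. Re (c j) * z ^ j\<bar> \<le> (\<Sum>j<n. B * t ^ n)"
    proof (rule order_trans[OF sum_abs sum_mono])
      fix j assume j: "j \<in> {..<n}"
      have "\<bar>Re (c j) * z ^ j\<bar> \<le> norm (c j) * \<bar>z\<bar> ^ j"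
        by (simp add: abs_mult power_abs mult_right_mono abs_Re_le_cmod)
      also have "\<dots> \<le> B / (R/2) ^ j * \<bar>z\<bar> ^ j" by (rule mult_right_mono[OF cb]) simp
      also have "\<dots> = B * (t / 2) ^ j" by (simp add: t_def power_divide)
      also have "\<dots> \<le> B * t ^ j" using B0 t0 by (intro mult_left_mono power_mono) auto
      also have "\<dots> \<le> B * t ^ n" using B0 t1 j by (intro mult_left_mono power_increasing) auto
      finally show "\<bar>Re (c j) * z ^ j\<bar> \<le> B * t ^ n" .
    qed
    also have "\<dots> = real n * B * t ^ n" by simp
    finally have 1: "\<bar>\<Sum>j<n. Re (c j) * z ^ j\<bar> \<le> real n * B * t ^ n" .
    have 2: "\<bar>F z\<bar> \<le> G z * t ^ (n + 2)"
    proof -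
      have "G z * 1 \<le> G z * t ^ (n + 2)" using G0 t1 by (intro mult_left_mono one_le_power) auto
      then show ?thesis using Fb[of z] by simp
    qed
    have "\<bar>F z - (\<Sum>j<n. Re (c j) * z ^ j)\<bar> \<le> \<bar>F z\<bar> + \<bar>\<Sum>j<n. Re (c j) * z ^ j\<bar>" by (rule abs_triangle_ineq4)
    also have "\<dots> \<le> (real n + 2) * B * t ^ n + G z * t ^ (n + 2)" using 1 2 Bt by (simp add: algebra_simps)
    finally show ?thesis by (simp add: c_def t_def)
  qed
qed

definition ez :: "real \<Rightarrow> nat \<Rightarrow> real \<Rightarrow> real \<Rightarrow> real \<Rightarrow> real" where
  "ez p k b I z = 1 / (p - 1 + b * (z / I) ^ (2 * k))"
definition uP :: "nat \<Rightarrow> (nat \<Rightarrow> real) \<Rightarrow> real \<Rightarrow> real \<Rightarrow> real" where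
  "uP mfl a I z = (\<Sum>m\<le>mfl. a m * (1 / I) ^ m * hr m z)"
definition ec :: "real \<Rightarrow> nat \<Rightarrow> real \<Rightarrow> real \<Rightarrow> complex \<Rightarrow> complex" where
  "ec p k b I w = 1 / (of_real (p - 1) + of_real b * (w / of_real I) ^ (2 * k))"
definition uPc :: "nat \<Rightarrow> (nat \<Rightarrow> real) \<Rightarrow> real \<Rightarrow> complex \<Rightarrow> complex" where
  "uPc mfl a I w = (\<Sum>m\<le>mfl. of_real (a m * (1 / I) ^ m) * hc m w)"

lemma ec_real: "ec p k b I (of_real z) = of_real (ez p k b I z)"
  by (simp add: ec_def ez_def)
lemma uPc_real: "uPc mfl a I (of_real z) = of_real (uP mfl a I z)"
  by (simp add: uPc_def uP_def hc_real)

definition Ku :: "nat \<Rightarrow> real" where "Ku mfl = (\<Sum>m\<le>mfl. hA m)"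
definition Kc :: "nat \<Rightarrow> real" where "Kc mfl = (\<Sum>m\<le>mfl. hA m * 2 ^ m)"

lemma Ku_nonneg: "0 \<le> Ku mfl" by (simp add: Ku_def sum_nonneg hA_nonneg)
lemma Kc_nonneg: "0 \<le> Kc mfl" by (simp add: Kc_def sum_nonneg hA_nonneg)

lemma uP_bound:
  assumes I: "1 \<le> I" and a: "\<And>m. m \<le> mfl \<Longrightarrow> \<bar>a m\<bar> \<le> E"
  shows "\<bar>uP mfl a I z\<bar> \<le> E * Ku mfl * (1 + \<bar>z\<bar>) ^ mfl"
proof -
  have E0: "0 \<le> E" using a[of 0] by linarith
  have "\<bar>uP mfl a I z\<bar> \<le> (\<Sum>m\<le>mfl. \<bar>a m * (1 / I) ^ m * hr m z\<bar>)"
    unfolding uP_def by (rule sum_abs)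
  also have "\<dots> \<le> (\<Sum>m\<le>mfl. E * (hA m * (1 + \<bar>z\<bar>) ^ mfl))"
  proof (rule sum_mono)
    fix m assume m: "m \<in> {..mfl}"
    have i1: "\<bar>(1 / I) ^ m\<bar> \<le> 1" using I by (simp add: power_le_one)
    have "\<bar>hr m z\<bar> \<le> hA m * (1 + \<bar>z\<bar>) ^ m" by (rule hr_bound)
    also have "\<dots> \<le> hA m * (1 + \<bar>z\<bar>) ^ mfl"
      using m by (intro mult_left_mono power_increasing hA_nonneg) auto
    finally have h: "\<bar>hr m z\<bar> \<le> hA m * (1 + \<bar>z\<bar>) ^ mfl" .
    have "\<bar>a m * (1 / I) ^ m * hr m z\<bar> = \<bar>a m\<bar> * \<bar>(1 / I) ^ m\<bar> * \<bar>hr m z\<bar>" by (simp add: abs_mult)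
    also have "\<dots> \<le> E * 1 * (hA m * (1 + \<bar>z\<bar>) ^ mfl)"
      using m a[of m] i1 h E0 by (intro mult_mono) auto
    finally show "\<bar>a m * (1 / I) ^ m * hr m z\<bar> \<le> E * (hA m * (1 + \<bar>z\<bar>) ^ mfl)" by simp
  qed
  also have "\<dots> = E * Ku mfl * (1 + \<bar>z\<bar>) ^ mfl" by (simp add: Ku_def sum_distrib_left sum_distrib_right mult_ac)
  finally show ?thesis .
qed

lemma uPc_bound:
  assumes I: "1 \<le> I" and a: "\<And>m. m \<le> mfl \<Longrightarrow> \<bar>a m\<bar> \<le> E" and w: "norm w \<le> I"
  shows "norm (uPc mfl a I w) \<le> E * Kc mfl"
proof -
  have E0: "0 \<le> E" using a[of 0] by linarith
  have "norm (uPc mfl a I w) \<le> (\<Sum>m\<le>mfl. norm (of_real (a m * (1 / I) ^ m) * hc m w))"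
    unfolding uPc_def by (rule norm_sum)
  also have "\<dots> \<le> (\<Sum>m\<le>mfl. E * (hA m * 2 ^ m))"
  proof (rule sum_mono)
    fix m assume m: "m \<in> {..mfl}"
    have "(1 / I) ^ m * norm (hc m w) \<le> (1 / I) ^ m * (hA m * (1 + norm w) ^ m)"
      using I by (intro mult_left_mono hc_bound) auto
    also have "\<dots> = hA m * ((1 + norm w) / I) ^ m" by (simp add: power_divide)
    also have "\<dots> \<le> hA m * 2 ^ m"
    proof (intro mult_left_mono power_mono hA_nonneg)
      show "(1 + norm w) / I \<le> 2" using I w by (simp add: field_simps)
    qed (use I in auto)
    finally have x: "(1 / I) ^ m * norm (hc m w) \<le> hA m * 2 ^ m" .
    have "norm (of_real (a m * (1 / I) ^ m) * hc m w) = \<bar>a m\<bar> * ((1 / I) ^ m * norm (hc m w))"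
      using I by (simp add: norm_mult abs_mult del: of_real_mult of_real_power of_real_divide)
    also have "\<dots> \<le> \<bar>a m\<bar> * (hA m * 2 ^ m)" by (intro mult_left_mono x) simp
    also have "\<dots> \<le> E * (hA m * 2 ^ m)" using a[of m] m by (intro mult_right_mono) (auto simp: hA_nonneg)
    finally show "norm (of_real (a m * (1 / I) ^ m) * hc m w) \<le> E * (hA m * 2 ^ m)" .
  qed
  also have "\<dots> = E * Kc mfl" by (simp add: Kc_def sum_distrib_left)
  finally show ?thesis .
qed

lemma ez_bound:
  assumes p: "p > 1" and b: "0 \<le> b"
  shows "0 < ez p k b I z" "ez p k b I z \<le> 1 / (p - 1)"
proof -
  have d: "p - 1 \<le> p - 1 + b * (z / I) ^ (2 * k)"
    using b by (simp add: zero_le_mult_iff power_mult power2_eq_square[symmetric] zero_le_power2 zero_le_even_power)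
  show "0 < ez p k b I z" using d p by (simp add: ez_def)
  show "ez p k b I z \<le> 1 / (p - 1)" using d p unfolding ez_def by (intro divide_left_mono) auto
qed

lemma aux2: "(x::real) \<le> P / 2 \<Longrightarrow> P / 2 \<le> P - x" by linarith

lemma ec_bound:
  assumes p: "p > 1" and b: "0 \<le> b" "b \<le> 2 * b0" and I: "I > 0" and k: "k \<ge> 1"
    and w: "norm w \<le> min 1 ((p - 1) / (4 * b0)) * I" and b0: "b0 > 0"
  shows "norm (of_real (p - 1) + of_real b * (w / of_real I) ^ (2 * k)) \<ge> (p - 1) / 2"
    and "norm (ec p k b I w) \<le> 2 / (p - 1)"
proof -
  define c2 where "c2 = min 1 ((p - 1) / (4 * b0))"
  have c2: "0 \<le> c2" "c2 \<le> 1" "c2 \<le> (p - 1) / (4 * b0)" using p b0 by (auto simp: c2_def)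
  have wI: "norm w / I \<le> c2" unfolding c2_def pos_divide_le_eq[OF I] using w .
  have "norm (of_real b * (w / of_real I) ^ (2 * k)) = b * (norm w / I) ^ (2 * k)"
    using b I by (simp add: norm_mult norm_power norm_divide)
  also have "\<dots> \<le> b * c2 ^ (2 * k)" using b wI I by (intro mult_left_mono power_mono) auto
  also have "\<dots> \<le> b * c2 ^ 1" using b c2 k by (intro mult_left_mono power_decreasing) auto
  also have "\<dots> \<le> 2 * b0 * ((p - 1) / (4 * b0))" using b c2 by (intro mult_mono) auto
  also have "\<dots> = (p - 1) / 2" using b0 by simp
  finally have 1: "norm (of_real b * (w / of_real I) ^ (2 * k)) \<le> (p - 1) / 2" .
  have "norm (of_real (p - 1) :: complex) - norm (of_real b * (w / of_real I) ^ (2 * k))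
        \<le> norm (of_real (p - 1) + of_real b * (w / of_real I) ^ (2 * k))"
    by (rule norm_diff_ineq)
  then show dn: "norm (of_real (p - 1) + of_real b * (w / of_real I) ^ (2 * k)) \<ge> (p - 1) / 2"
  proof -
    have np: "norm (of_real (p - 1) :: complex) = p - 1" using p by (simp only: norm_of_real)
    have "(p - 1) / 2 \<le> norm (of_real (p - 1) :: complex) - norm (of_real b * (w / of_real I) ^ (2 * k))"
      unfolding np by (rule aux2[OF 1])
    then show ?thesis using \<open>norm (of_real (p - 1) :: complex) - _ \<le> _\<close> by (rule order_trans)
  qed
  define D where "D = of_real (p - 1) + of_real b * (w / of_real I) ^ (2 * k)"
  have "norm (ec p k b I w) = 1 / norm D" unfolding ec_def D_def[symmetric] norm_divide by simp
  also have "\<dots> \<le> 1 / ((p - 1) / 2)"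
  proof (rule divide_left_mono)
    show "(p - 1) / 2 \<le> norm D" using dn unfolding D_def .
    show "0 < norm D * ((p - 1) / 2)" using dn p unfolding D_def[symmetric] by (intro mult_pos_pos) auto
  qed simp
  also have "\<dots> = 2 / (p - 1)" by simp
  finally show "norm (ec p k b I w) \<le> 2 / (p - 1)" .
qed


lemma ec_holo:
  assumes p: "p > 1" and b: "0 \<le> b" "b \<le> 2 * b0" and I: "I > 0" and k: "k \<ge> 1" and b0: "b0 > 0"
  shows "ec p k b I holomorphic_on ball 0 (min 1 ((p - 1) / (4 * b0)) * I)"
proof -
  have "(\<lambda>w. 1 / (of_real (p - 1) + of_real b * (w / of_real I) ^ (2 * k))) holomorphic_on ball 0 (min 1 ((p - 1) / (4 * b0)) * I)"
  proof (intro holomorphic_intros)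
    fix w :: complex assume w: "w \<in> ball 0 (min 1 ((p - 1) / (4 * b0)) * I)"
    have "(p - 1) / 2 \<le> norm (of_real (p - 1) + of_real b * (w / of_real I) ^ (2 * k))"
      using w by (intro ec_bound(1)[OF p b I k _ b0]) auto
    then show "complex_of_real (p - 1) + complex_of_real b * (w / complex_of_real I) ^ (2 * k) \<noteq> 0"
      using p by auto
  qed (use I in auto)
  then show ?thesis by (simp add: ec_def[abs_def])
qed

lemma uPc_holo: "uPc mfl a I holomorphic_on S"
  unfolding uPc_def[abs_def] by (intro holomorphic_intros)

lemma taylor_xP:
  fixes p b0 b I E :: real and k mfl n :: nat and a :: "nat \<Rightarrow> real"
  assumes p: "p > 1" and k: "k \<ge> 1" and b0: "b0 > 0" and b: "0 \<le> b" "b \<le> 2 * b0" and I: "1 \<le> I"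
    and a: "\<And>m. m \<le> mfl \<Longrightarrow> \<bar>a m\<bar> \<le> E" and E1: "E \<le> 1"
    and KxE: "2 * Kc mfl / (p - 1) * E \<le> 1/4"
  shows "\<exists>d. \<forall>z. \<bar>Nr p (ez p k b I z * uP mfl a I z) - (\<Sum>j<n. d j * z ^ j)\<bar>
      \<le> (real n + 2) * (8 * (2 powr p + 1 + p) * (2 * Kc mfl / (p - 1) * E)\<^sup>2) * (4 * \<bar>z\<bar> / (min 1 ((p - 1) / (4 * b0)) * I)) ^ n
       + (2 + p) * (1 + Ku mfl / (p - 1) * (1 + \<bar>z\<bar>) ^ mfl) ^ nat \<lceil>p\<rceil> * (4 * \<bar>z\<bar> / (min 1 ((p - 1) / (4 * b0)) * I)) ^ (n + 2)"
proof -
  define c2 where "c2 = min 1 ((p - 1) / (4 * b0))"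
  define R where "R = c2 * I"
  define Kx where "Kx = 2 * Kc mfl / (p - 1)"
  define B where "B = 8 * (2 powr p + 1 + p) * (Kx * E)\<^sup>2"
  define X where "X w = ec p k b I w * uPc mfl a I w" for w
  define f where "f w = gc p (X w)" for w
  define F where "F z = Nr p (ez p k b I z * uP mfl a I z)" for z
  define G where "G z = (2 + p) * (1 + Ku mfl / (p - 1) * (1 + \<bar>z\<bar>) ^ mfl) ^ nat \<lceil>p\<rceil>" for z
  have I0: "I > 0" using I by simp
  have E0: "0 \<le> E" using a[of 0] by linarith
  have c2: "0 < c2" "c2 \<le> 1" using p b0 by (auto simp: c2_def)
  have R0: "R > 0" using c2 I0 by (simp add: R_def)
  have RI: "R \<le> I" using c2 I0 by (simp add: R_def)
  have Xb: "norm (X w) \<le> Kx * E" if w: "norm w \<le> R" for w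
  proof -
    have "norm (X w) = norm (ec p k b I w) * norm (uPc mfl a I w)" by (simp add: X_def norm_mult)
    also have "\<dots> \<le> (2 / (p - 1)) * (E * Kc mfl)"
    proof (rule mult_mono)
      show "norm (ec p k b I w) \<le> 2 / (p - 1)"
        using w by (intro ec_bound(2)[OF p b I0 k _ b0]) (simp add: R_def c2_def)
      show "norm (uPc mfl a I w) \<le> E * Kc mfl" using w RI by (intro uPc_bound[OF I a]) auto
    qed (use p in auto)
    also have "\<dots> = Kx * E" by (simp add: Kx_def)
    finally show ?thesis .
  qed
  have Xq: "norm (X w) \<le> 1/4" if "norm w \<le> R" for w
    using Xb[OF that] KxE by (simp add: Kx_def)
  have holX: "X holomorphic_on ball 0 R"
    unfolding X_def[abs_def] R_def c2_def
    by (intro holomorphic_intros ec_holo[OF p b I0 k b0] uPc_holo)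
  have holf: "f holomorphic_on ball 0 R"
  proof -
    have Xlt: "norm (X w) < 1" if "w \<in> ball 0 R" for w
    proof -
      have "norm w \<le> R" using that by simp
      then have "norm (X w) \<le> 1/4" by (rule Xq)
      then show ?thesis by simp
    qed
    show ?thesis unfolding f_def by (rule gc_holo_comp[OF holX Xlt])
  qed
  have fb: "norm (f w) \<le> B" if "norm w \<le> R/2" for w
  proof -
    have w: "norm w \<le> R" using that R0 by simp
    have "norm (f w) \<le> 8 * (2 powr p + 1 + p) * norm (X w) ^ 2"
      unfolding f_def by (rule gc_bound[OF p Xq[OF w]])
    also have "\<dots> \<le> 8 * (2 powr p + 1 + p) * (Kx * E) ^ 2"
      using p by (intro mult_left_mono power_mono Xb[OF w]) auto
    finally show ?thesis by (simp add: B_def)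
  qed
  have fr: "f (of_real z) = of_real (F z)" if "\<bar>z\<bar> \<le> R/4" for z
  proof -
    have "norm (X (of_real z)) \<le> 1/4" using that R0 by (intro Xq) auto
    moreover have Xr: "X (of_real z) = of_real (ez p k b I z * uP mfl a I z)"
      by (simp add: X_def ec_real uPc_real)
    ultimately have "norm (complex_of_real (ez p k b I z * uP mfl a I z)) \<le> 1/4" by simp
    then have "\<bar>ez p k b I z * uP mfl a I z\<bar> < 1" by (simp only: norm_of_real)
    then show ?thesis
      unfolding f_def F_def Xr by (rule gc_real)
  qed
  have Fb: "\<bar>F z\<bar> \<le> G z" for z
  proof -
    have "\<bar>ez p k b I z * uP mfl a I z\<bar> \<le> 1 / (p - 1) * (E * Ku mfl * (1 + \<bar>z\<bar>) ^ mfl)"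
    proof -
      have e1: "\<bar>ez p k b I z\<bar> \<le> 1/(p-1)" using ez_bound[OF p b(1), of k I z] by simp
      have u1: "\<bar>uP mfl a I z\<bar> \<le> E * Ku mfl * (1+\<bar>z\<bar>)^mfl" by (rule uP_bound[OF I a])
      show ?thesis unfolding abs_mult by (intro mult_mono e1 u1) (use p in auto)
    qed
    also have "\<dots> \<le> 1 / (p - 1) * (1 * Ku mfl * (1 + \<bar>z\<bar>) ^ mfl)"
      using p E1 Ku_nonneg by (intro mult_left_mono mult_right_mono) auto
    finally have xb: "\<bar>ez p k b I z * uP mfl a I z\<bar> \<le> Ku mfl / (p - 1) * (1 + \<bar>z\<bar>) ^ mfl" by simp
    have "\<bar>F z\<bar> \<le> (2 + p) * (1 + \<bar>ez p k b I z * uP mfl a I z\<bar>) ^ nat \<lceil>p\<rceil>"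
      unfolding F_def by (rule Nr_crude[OF p])
    also have "\<dots> \<le> G z" unfolding G_def
      using xb p by (intro mult_left_mono power_mono) auto
    finally show ?thesis .
  qed
  show ?thesis
    apply (rule exI[of _ "\<lambda>j. Re ((deriv ^^ j) f 0 / fact j)"])
    using taylor_real[OF holf R0 fb fr Fb]
    by (simp add: F_def G_def B_def Kx_def R_def c2_def)
qed


definition "Np p = nat \<lceil>p\<rceil>"
definition "c2f p b0 = min 1 ((p - 1) / (4 * b0))"
definition "Kxf p mfl = 2 * Kc mfl / (p - 1)"
definition "Kgf p = 8 * (2 powr p + 1 + p)"
definition "Klf p = p * (2 ^ Np p + 1)"
definition "K3f p mfl = 1 + Ku mfl / (p - 1) + 2 / (p - 1)"
definition "K4f p mfl = 1 + Ku mfl / (p - 1)"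
definition "DDf p mfl n = (mfl + 1) * (Np p + 1) + n + 2"
definition "KT p b0 mfl n = Klf p * (2 / (p - 1)) * K3f p mfl ^ Np p
   + (real n + 2) * Kgf p * (Kxf p mfl)\<^sup>2 * (4 / c2f p b0) ^ n
   + (2 + p) * K4f p mfl ^ Np p * (4 / c2f p b0) ^ (n + 2)"

lemma inv_pow: "0 < (I::real) \<Longrightarrow> (1/I)^m = I powr (- real m)"
  by (simp add: powr_minus powr_realpow power_one_over divide_inverse power_inverse)

lemma pow3: "(4 * \<bar>z\<bar> / (c * I)) ^ m = (4 / c) ^ m * \<bar>z\<bar> ^ m * (1 / (I::real)) ^ m"
  by (simp add: power_divide power_mult_distrib)

lemma pw_bound:
  fixes p b0 b I \<delta> Mr :: real and k mfl n :: nat and a :: "nat \<Rightarrow> real" and r :: "real \<Rightarrow> real"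
  assumes p: "p > 1" and k: "k \<ge> 1" and b0: "b0 > 0" and b: "0 \<le> b" "b \<le> 2 * b0" and I: "1 \<le> I"
    and \<delta>: "0 < \<delta>" "\<delta> \<le> 1" and nM: "real n + \<delta> \<le> Mr" and Mr: "0 < Mr" "Mr \<le> real mfl + 1"
    and a: "\<And>m. m \<le> mfl \<Longrightarrow> \<bar>a m\<bar> \<le> I powr (-\<delta>)"
    and KxE: "Kxf p mfl * I powr (-\<delta>) \<le> 1/4"
    and rb: "\<And>z. \<bar>r z\<bar> \<le> I powr (-\<delta>) * (I powr (-Mr) + \<bar>z / I\<bar> powr Mr)"
  shows "\<exists>d. \<forall>z. \<bar>Nr p (ez p k b I z * (uP mfl a I z + r z)) - (\<Sum>j<n. d j * z ^ j)\<bar>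
      \<le> KT p b0 mfl n * I powr (- real n - 2 * \<delta>) * (1 + \<bar>z\<bar>) ^ DDf p mfl n"
proof -
  define E where "E = I powr (-\<delta>)"
  define J where "J = I powr (- real n - 2 * \<delta>)"
  define N where "N = Np p"
  define D where "D = DDf p mfl n"
  define c2 where "c2 = c2f p b0"
  have I0: "0 < I" using I by simp
  have E0: "0 \<le> E" by (simp add: E_def)
  have E1: "E \<le> 1" using powr_mono[of "-\<delta>" 0 I] I \<delta> by (simp add: E_def)
  have J0: "0 \<le> J" by (simp add: J_def)
  have J1: "J \<le> 1" using powr_mono[of "- real n - 2 * \<delta>" 0 I] I \<delta> by (simp add: J_def)
  have c2: "0 < c2" using p b0 by (simp add: c2_def c2f_def)
  have Ku0: "0 \<le> Ku mfl" by (rule Ku_nonneg)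
  have Kc0: "0 \<le> Kc mfl" by (rule Kc_nonneg)
  have EEn: "E\<^sup>2 * (1 / I) ^ n = J"
  proof -
    have "E\<^sup>2 = I powr (-2 * \<delta>)" by (simp add: E_def power2_eq_square powr_add[symmetric])
    moreover have "(1 / I) ^ n = I powr (- real n)" using I0 by (simp add: powr_minus powr_realpow power_one_over divide_inverse power_inverse)
    moreover have "I powr (- (2 * \<delta>)) * I powr (- real n) = I powr (- real n - 2 * \<delta>)"
    proof -
      have "- real n - 2 * \<delta> = - (2 * \<delta>) + - real n" by simp
      then show ?thesis by (simp only: powr_add)
    qed
    ultimately show ?thesis unfolding J_def by simp
  qed
  have In2: "(1 / I) ^ (n + 2) \<le> J"
  proof -
    have "(1 / I) ^ (n + 2) = I powr (- real (n + 2))" by (rule inv_pow[OF I0])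
    also have "\<dots> \<le> J" unfolding J_def using I \<delta> by (intro powr_mono) auto
    finally show ?thesis .
  qed
  have EM: "E * I powr (-Mr) \<le> J"
  proof -
    have "E * I powr (-Mr) = I powr (-\<delta> - Mr)" by (simp add: E_def powr_add[symmetric])
    also have "\<dots> \<le> J" unfolding J_def using I nM by (intro powr_mono) auto
    finally show ?thesis .
  qed
  obtain d where d: "\<And>z. \<bar>Nr p (ez p k b I z * uP mfl a I z) - (\<Sum>j<n. d j * z ^ j)\<bar>
      \<le> (real n + 2) * (8 * (2 powr p + 1 + p) * (2 * Kc mfl / (p - 1) * E)\<^sup>2) * (4 * \<bar>z\<bar> / (min 1 ((p - 1) / (4 * b0)) * I)) ^ n
       + (2 + p) * (1 + Ku mfl / (p - 1) * (1 + \<bar>z\<bar>) ^ mfl) ^ nat \<lceil>p\<rceil> * (4 * \<bar>z\<bar> / (min 1 ((p - 1) / (4 * b0)) * I)) ^ (n + 2)"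
    using taylor_xP[OF p k b0 b I _ E1, of mfl a n] a KxE by (auto simp: E_def Kxf_def)
  show ?thesis
  proof (intro exI allI)
    fix z :: real
    define W where "W = 1 + \<bar>z\<bar>"
    have W1: "1 \<le> W" by (simp add: W_def)
    have Wz: "\<bar>z\<bar> \<le> W" by (simp add: W_def)
    have Wp: "W ^ e \<le> W ^ D" if "e \<le> D" for e using W1 that by (intro power_increasing)
    define xP where "xP = ez p k b I z * uP mfl a I z"
    define er where "er = ez p k b I z * r z"
    have ezb: "\<bar>ez p k b I z\<bar> \<le> 1 / (p - 1)" using ez_bound[OF p b(1), of k I z] by simp
    have T1: "(real n + 2) * (8 * (2 powr p + 1 + p) * (2 * Kc mfl / (p - 1) * E)\<^sup>2) * (4 * \<bar>z\<bar> / (c2 * I)) ^ n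
        \<le> (real n + 2) * Kgf p * (Kxf p mfl)\<^sup>2 * (4 / c2) ^ n * J * W ^ D"
    proof -
      have h0: "(4 * \<bar>z\<bar> / (c2 * I)) ^ n = (4 / c2) ^ n * \<bar>z\<bar> ^ n * (1 / I) ^ n"
        by (simp add: power_divide power_mult_distrib)
      have h1: "(2 * Kc mfl / (p - 1) * E)\<^sup>2 = (Kxf p mfl)\<^sup>2 * E\<^sup>2" unfolding Kxf_def by (rule power_mult_distrib)
      have h2: "8 * (2 powr p + 1 + p) = Kgf p" by (simp add: Kgf_def)
      have "(real n + 2) * (8 * (2 powr p + 1 + p) * (2 * Kc mfl / (p - 1) * E)\<^sup>2) * (4 * \<bar>z\<bar> / (c2 * I)) ^ n
          = (real n + 2) * Kgf p * (Kxf p mfl)\<^sup>2 * (4 / c2) ^ n * (E\<^sup>2 * (1 / I) ^ n) * \<bar>z\<bar> ^ n"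
        unfolding h0 h1 h2 by (simp only: mult_ac)
      also have "\<dots> \<le> (real n + 2) * Kgf p * (Kxf p mfl)\<^sup>2 * (4 / c2) ^ n * J * W ^ D"
      proof -
        have "\<bar>z\<bar> ^ n \<le> W ^ n" by (rule power_mono[OF Wz]) simp
        also have "W ^ n \<le> W ^ D" by (rule Wp) (simp add: D_def DDf_def)
        finally have "\<bar>z\<bar> ^ n \<le> W ^ D" .
        moreover have "0 \<le> (real n + 2) * Kgf p * (Kxf p mfl)\<^sup>2 * (4 / c2) ^ n * J"
          using p c2 J0 by (simp add: Kgf_def)
        ultimately show ?thesis unfolding EEn by (intro mult_left_mono) auto
      qed
      finally show ?thesis .
    qed
    have T2: "(2 + p) * (1 + Ku mfl / (p - 1) * (1 + \<bar>z\<bar>) ^ mfl) ^ nat \<lceil>p\<rceil> * (4 * \<bar>z\<bar> / (c2 * I)) ^ (n + 2)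
        \<le> (2 + p) * K4f p mfl ^ Np p * (4 / c2) ^ (n + 2) * J * W ^ D"
    proof -
      have a1: "1 + Ku mfl / (p - 1) * W ^ mfl \<le> K4f p mfl * W ^ mfl"
        using W1 by (simp add: K4f_def algebra_simps one_le_power)
      have a2: "(1 + Ku mfl / (p - 1) * W ^ mfl) ^ N \<le> K4f p mfl ^ N * W ^ (mfl * N)"
      proof -
        have "(1 + Ku mfl / (p - 1) * W ^ mfl) ^ N \<le> (K4f p mfl * W ^ mfl) ^ N"
          using a1 Ku0 p W1 by (intro power_mono) auto
        then show ?thesis by (simp add: power_mult_distrib power_mult)
      qed
      have a3: "(4 * \<bar>z\<bar> / (c2 * I)) ^ (n + 2) \<le> (4 / c2) ^ (n + 2) * W ^ (n + 2) * J"
      proof -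
        have "(4 * \<bar>z\<bar> / (c2 * I)) ^ (n + 2) = (4 / c2) ^ (n + 2) * \<bar>z\<bar> ^ (n + 2) * (1 / I) ^ (n + 2)"
          by (rule pow3)
        also have "\<dots> \<le> (4 / c2) ^ (n + 2) * W ^ (n + 2) * J"
          using c2 Wz In2 I0 by (intro mult_mono power_mono) auto
        finally show ?thesis .
      qed
      have "(2 + p) * (1 + Ku mfl / (p - 1) * W ^ mfl) ^ N * (4 * \<bar>z\<bar> / (c2 * I)) ^ (n + 2)
          \<le> (2 + p) * (K4f p mfl ^ N * W ^ (mfl * N)) * ((4 / c2) ^ (n + 2) * W ^ (n + 2) * J)"
      proof (rule mult_mono)
        show "(2 + p) * (1 + Ku mfl / (p - 1) * W ^ mfl) ^ N \<le> (2 + p) * (K4f p mfl ^ N * W ^ (mfl * N))"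
          using a2 p by (intro mult_left_mono) auto
        show "(4 * \<bar>z\<bar> / (c2 * I)) ^ (n + 2) \<le> (4 / c2) ^ (n + 2) * W ^ (n + 2) * J" by (rule a3)
        have "0 \<le> K4f p mfl" using Ku0 p by (simp add: K4f_def)
        then show "0 \<le> (2 + p) * (K4f p mfl ^ N * W ^ (mfl * N))" using p W1 by simp
        show "0 \<le> (4 * \<bar>z\<bar> / (c2 * I)) ^ (n + 2)" using c2 I0 by simp
      qed
      also have "\<dots> = (2 + p) * K4f p mfl ^ N * (4 / c2) ^ (n + 2) * J * W ^ (mfl * N + (n + 2))"
        by (simp add: power_add mult_ac)
      also have "\<dots> \<le> (2 + p) * K4f p mfl ^ N * (4 / c2) ^ (n + 2) * J * W ^ D"
        using p J0 c2 Ku0 by (intro mult_left_mono Wp) (auto simp: D_def DDf_def N_def K4f_def)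
      finally show ?thesis by (simp add: W_def N_def Np_def)
    qed
    have Tay: "\<bar>Nr p xP - (\<Sum>j<n. d j * z ^ j)\<bar>
        \<le> ((real n + 2) * Kgf p * (Kxf p mfl)\<^sup>2 * (4 / c2) ^ n + (2 + p) * K4f p mfl ^ Np p * (4 / c2) ^ (n + 2)) * J * W ^ D"
      using d[of z] T1 T2 unfolding xP_def c2_def c2f_def by (simp add: algebra_simps)
    have rW: "\<bar>r z\<bar> \<le> 2 * J * W ^ (mfl + 1)"
    proof -
      have zp: "\<bar>z\<bar> powr Mr \<le> W ^ (mfl + 1)"
      proof -
        have "\<bar>z\<bar> powr Mr \<le> W powr Mr" using Mr Wz by (intro powr_mono2) auto
        also have "\<dots> \<le> W ^ (mfl + 1)" using W1 Mr by (intro powr_le_pow) auto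
        finally show ?thesis .
      qed
      have "I powr (-Mr) + \<bar>z / I\<bar> powr Mr = I powr (-Mr) * (1 + \<bar>z\<bar> powr Mr)"
      proof -
        have "\<bar>z / I\<bar> powr Mr = \<bar>z\<bar> powr Mr / I powr Mr" using I0 by (simp add: abs_divide powr_divide)
        then show ?thesis by (simp add: powr_minus divide_inverse algebra_simps)
      qed
      also have "\<dots> \<le> I powr (-Mr) * (2 * W ^ (mfl + 1))"
      proof (intro mult_left_mono)
        have "1 \<le> W ^ (mfl + 1)" using W1 by (rule one_le_power)
        then show "1 + \<bar>z\<bar> powr Mr \<le> 2 * W ^ (mfl + 1)" using zp by linarith
      qed simp
      finally have "\<bar>r z\<bar> \<le> E * (I powr (-Mr) * (2 * W ^ (mfl + 1)))"
        using rb[of z] E0 unfolding E_def by (meson mult_left_mono order_trans)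
      also have "\<dots> = 2 * (E * I powr (-Mr)) * W ^ (mfl + 1)" by (simp add: mult_ac)
      also have "\<dots> \<le> 2 * J * W ^ (mfl + 1)" using EM W1 by (intro mult_right_mono) auto
      finally show ?thesis .
    qed
    have erb: "\<bar>er\<bar> \<le> 2 / (p - 1) * J * W ^ (mfl + 1)"
    proof -
      have "\<bar>er\<bar> \<le> 1 / (p - 1) * (2 * J * W ^ (mfl + 1))"
        unfolding er_def abs_mult by (intro mult_mono ezb rW) (use p in auto)
      then show ?thesis by simp
    qed
    have xPb: "\<bar>xP\<bar> \<le> Ku mfl / (p - 1) * W ^ mfl"
    proof -
      have "\<bar>xP\<bar> \<le> 1 / (p - 1) * (E * Ku mfl * W ^ mfl)"
      proof -
        have u1: "\<bar>uP mfl a I z\<bar> \<le> E * Ku mfl * W ^ mfl" unfolding E_def W_def by (rule uP_bound[OF I a])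
        show ?thesis unfolding xP_def abs_mult by (intro mult_mono ezb u1) (use p in auto)
      qed
      also have "\<dots> \<le> 1 / (p - 1) * (1 * Ku mfl * W ^ mfl)"
        using p E1 Ku0 W1 by (intro mult_left_mono mult_right_mono) auto
      finally show ?thesis by simp
    qed
    have K3b: "1 + \<bar>xP\<bar> + \<bar>er\<bar> \<le> K3f p mfl * W ^ (mfl + 1)"
    proof -
      have "W ^ mfl \<le> W ^ (mfl + 1)" using W1 by (intro power_increasing) auto
      then have "Ku mfl / (p - 1) * W ^ mfl \<le> Ku mfl / (p - 1) * W ^ (mfl + 1)"
        using Ku0 p by (intro mult_left_mono) auto
      moreover have "2 / (p - 1) * J * W ^ (mfl + 1) \<le> 2 / (p - 1) * W ^ (mfl + 1)"
      proof -
        have "0 \<le> 2 / (p - 1) * W ^ (mfl + 1)" using p W1 by simp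
        then have "2 / (p - 1) * W ^ (mfl + 1) * J \<le> 2 / (p - 1) * W ^ (mfl + 1) * 1"
          using J1 by (intro mult_left_mono)
        then show ?thesis by (simp only: mult_ac mult_1_right)
      qed
      moreover have "1 \<le> W ^ (mfl + 1)" using W1 by (rule one_le_power)
      ultimately show ?thesis using xPb erb by (simp add: K3f_def algebra_simps)
    qed
    have Lip: "\<bar>Nr p (xP + er) - Nr p xP\<bar> \<le> Klf p * (2 / (p - 1)) * K3f p mfl ^ Np p * J * W ^ D"
    proof -
      have "\<bar>Nr p (xP + er) - Nr p xP\<bar> \<le> Klf p * \<bar>er\<bar> * (1 + \<bar>xP\<bar> + \<bar>er\<bar>) ^ N"
        using Nr_lip[OF p, of xP er] by (simp add: Klf_def N_def Np_def)
      also have "\<dots> \<le> Klf p * (2 / (p - 1) * J * W ^ (mfl + 1)) * (K3f p mfl * W ^ (mfl + 1)) ^ N"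
      proof (rule mult_mono)
        show "Klf p * \<bar>er\<bar> \<le> Klf p * (2 / (p - 1) * J * W ^ (mfl + 1))"
          using p erb by (intro mult_left_mono) (auto simp: Klf_def)
        show "(1 + \<bar>xP\<bar> + \<bar>er\<bar>) ^ N \<le> (K3f p mfl * W ^ (mfl + 1)) ^ N"
          using K3b by (intro power_mono) auto
        show "0 \<le> Klf p * (2 / (p - 1) * J * W ^ (mfl + 1))"
          using p J0 W1 by (simp add: Klf_def)
      qed simp
      also have "\<dots> = Klf p * (2 / (p - 1)) * K3f p mfl ^ N * J * W ^ ((mfl + 1) * (N + 1))"
        by (simp add: power_mult_distrib power_mult[symmetric] power_add mult_ac)
      also have "\<dots> \<le> Klf p * (2 / (p - 1)) * K3f p mfl ^ N * J * W ^ D"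
        using p J0 Ku0 by (intro mult_left_mono Wp) (auto simp: D_def DDf_def N_def Klf_def K3f_def)
      finally show ?thesis by (simp add: N_def)
    qed
    have "ez p k b I z * (uP mfl a I z + r z) = xP + er" by (simp add: xP_def er_def algebra_simps)
    then have "\<bar>Nr p (ez p k b I z * (uP mfl a I z + r z)) - (\<Sum>j<n. d j * z ^ j)\<bar>
        \<le> \<bar>Nr p (xP + er) - Nr p xP\<bar> + \<bar>Nr p xP - (\<Sum>j<n. d j * z ^ j)\<bar>" by simp
    also have "\<dots> \<le> KT p b0 mfl n * J * W ^ D"
      using Lip Tay by (simp add: KT_def c2_def algebra_simps)
    finally show "\<bar>Nr p (ez p k b I z * (uP mfl a I z + r z)) - (\<Sum>j<n. d j * z ^ j)\<bar>
        \<le> KT p b0 mfl n * I powr (- real n - 2 * \<delta>) * (1 + \<bar>z\<bar>) ^ DDf p mfl n"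
      by (simp add: J_def W_def D_def)
  qed
qed


lemma core:
  fixes p b0 \<delta> Mr :: real and k mfl n :: nat
  assumes p: "p > 1" and k: "k \<ge> 1" and b0: "b0 > 0" and \<delta>: "0 < \<delta>" "\<delta> \<le> 1"
    and nM: "real n + \<delta> \<le> Mr" and Mr: "0 < Mr" "Mr \<le> real mfl + 1"
  shows "\<exists>C I0. 1 \<le> I0 \<and> (\<forall>I b a r. I0 \<le> I \<longrightarrow> 0 \<le> b \<longrightarrow> b \<le> 2 * b0 \<longrightarrow>
      (\<forall>m\<le>mfl. \<bar>a m\<bar> \<le> I powr (-\<delta>)) \<longrightarrow>
      (\<forall>z. \<bar>r z\<bar> \<le> I powr (-\<delta>) * (I powr (-Mr) + \<bar>z / I\<bar> powr Mr)) \<longrightarrow>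
      r \<in> borel_measurable borel \<longrightarrow>
      \<bar>\<integral>z. Nr p (ez p k b I z * (uP mfl a I z + r z)) * hr n z * rho0 z \<partial>lborel\<bar>
        \<le> C * I powr (- real n - 2 * \<delta>))"
proof -
  define Kx where "Kx = Kxf p mfl"
  define D where "D = DDf p mfl n"
  define I0 where "I0 = max 1 ((4 * Kx + 1) powr (1 / \<delta>))"
  have Kx0: "0 \<le> Kx" using p Kc_nonneg[of mfl] by (simp add: Kx_def Kxf_def)
  show ?thesis
  proof (intro exI conjI allI impI)
    show "1 \<le> I0" by (simp add: I0_def)
    fix I b a and r :: "real \<Rightarrow> real"
    assume I: "I0 \<le> I" and b: "0 \<le> b" "b \<le> 2 * b0" and a: "\<forall>m\<le>mfl. \<bar>a m\<bar> \<le> I powr (-\<delta>)"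
      and rb: "\<forall>z. \<bar>r z\<bar> \<le> I powr (-\<delta>) * (I powr (-Mr) + \<bar>z / I\<bar> powr Mr)"
      and rm[measurable]: "r \<in> borel_measurable borel"
    have I1: "1 \<le> I" using I by (simp add: I0_def)
    have KxE: "Kxf p mfl * I powr (-\<delta>) \<le> 1/4"
    proof -
      have "4 * Kx + 1 = ((4 * Kx + 1) powr (1 / \<delta>)) powr \<delta>"
        using \<delta> Kx0 by (simp add: powr_powr)
      also have "\<dots> \<le> I powr \<delta>"
        using I \<delta> by (intro powr_mono2) (auto simp: I0_def)
      finally have i: "4 * Kx + 1 \<le> I powr \<delta>" .
      have "Kx * I powr (-\<delta>) = Kx / I powr \<delta>" by (simp add: powr_minus divide_inverse)
      also have "\<dots> \<le> Kx / (4 * Kx + 1)" using i Kx0 I1 by (intro divide_left_mono) (auto intro!: mult_pos_pos)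
      also have "\<dots> \<le> 1/4" using Kx0 by (simp add: field_simps)
      finally show ?thesis by (simp add: Kx_def)
    qed
    obtain d where d: "\<And>z. \<bar>Nr p (ez p k b I z * (uP mfl a I z + r z)) - (\<Sum>j<n. d j * z ^ j)\<bar>
        \<le> KT p b0 mfl n * I powr (- real n - 2 * \<delta>) * (1 + \<bar>z\<bar>) ^ DDf p mfl n"
      using pw_bound[OF p k b0 b I1 \<delta> nM Mr _ KxE, of a r] a rb by blast
    define P where "P z = (\<Sum>j<n. d j * z ^ j)" for z
    define f where "f z = Nr p (ez p k b I z * (uP mfl a I z + r z)) - P z" for z
    have fm: "f \<in> borel_measurable borel" unfolding f_def P_def Nr_def ez_def uP_def by measurable
    have Pm: "P \<in> borel_measurable borel" unfolding P_def by measurable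
    have fb: "\<bar>f z\<bar> \<le> (KT p b0 mfl n * I powr (- real n - 2 * \<delta>)) * (1 + \<bar>z\<bar>) ^ D" for z
      using d[of z] by (simp add: f_def P_def D_def)
    have Pb: "\<bar>P z\<bar> \<le> (\<Sum>j<n. \<bar>d j\<bar>) * (1 + \<bar>z\<bar>) ^ n" for z
    proof -
      have "\<bar>P z\<bar> \<le> (\<Sum>j<n. \<bar>d j * z ^ j\<bar>)" unfolding P_def by (rule sum_abs)
      also have "\<dots> \<le> (\<Sum>j<n. \<bar>d j\<bar> * (1 + \<bar>z\<bar>) ^ n)"
      proof (rule sum_mono)
        fix j assume j: "j \<in> {..<n}"
        have "\<bar>z\<bar> ^ j \<le> (1 + \<bar>z\<bar>) ^ j" by (intro power_mono) auto
        also have "\<dots> \<le> (1 + \<bar>z\<bar>) ^ n" using j by (intro power_increasing) auto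
        finally show "\<bar>d j * z ^ j\<bar> \<le> \<bar>d j\<bar> * (1 + \<bar>z\<bar>) ^ n"
          by (simp add: abs_mult power_abs mult_left_mono)
      qed
      finally show ?thesis by (simp add: sum_distrib_right)
    qed
    have fi: "integrable lborel (\<lambda>z. f z * hr n z * rho0 z)" by (rule int_bound(1)[OF fm fb])
    have fI: "\<bar>\<integral>z. f z * hr n z * rho0 z \<partial>lborel\<bar> \<le> KT p b0 mfl n * I powr (- real n - 2 * \<delta>) * hA n * WE (D + n)"
      by (rule int_bound(2)[OF fm fb])
    have Pi: "integrable lborel (\<lambda>z. P z * hr n z * rho0 z)" by (rule int_bound(1)[OF Pm Pb])
    have P0: "(\<integral>z. P z * hr n z * rho0 z \<partial>lborel) = 0" unfolding P_def by (rule hr_orth) simp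
    have "(\<integral>z. Nr p (ez p k b I z * (uP mfl a I z + r z)) * hr n z * rho0 z \<partial>lborel)
        = (\<integral>z. f z * hr n z * rho0 z + P z * hr n z * rho0 z \<partial>lborel)"
      by (rule Bochner_Integration.integral_cong) (simp_all add: f_def algebra_simps)
    also have "\<dots> = (\<integral>z. f z * hr n z * rho0 z \<partial>lborel)"
      using fi Pi P0 by simp
    finally have eq: "(\<integral>z. Nr p (ez p k b I z * (uP mfl a I z + r z)) * hr n z * rho0 z \<partial>lborel)
        = (\<integral>z. f z * hr n z * rho0 z \<partial>lborel)" .
    show "\<bar>\<integral>z. Nr p (ez p k b I z * (uP mfl a I z + r z)) * hr n z * rho0 z \<partial>lborel\<bar>
        \<le> (KT p b0 mfl n * hA n * WE (D + n)) * I powr (- real n - 2 * \<delta>)"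
      using fI unfolding eq by (simp add: mult_ac)
  qed
qed


lemma Mfl_facts:
  assumes p: "p > 1" and k: "k \<ge> 1"
  shows "0 < Mexp p k" "real (Mfl p k) < Mexp p k" "Mexp p k \<le> real (Mfl p k) + 1"
proof -
  show M0: "0 < Mexp p k" using p k by (simp add: Mexp_def)
  have c1: "Mexp p k \<le> of_int \<lceil>Mexp p k\<rceil>" by (rule le_of_int_ceiling)
  have c2: "of_int \<lceil>Mexp p k\<rceil> < Mexp p k + 1" using ceiling_correct[of "Mexp p k"] by linarith
  have c0: "\<lceil>Mexp p k\<rceil> \<ge> 1" using M0 c1 by linarith
  have e: "real (Mfl p k) = of_int \<lceil>Mexp p k\<rceil> - 1" using c0 by (simp add: Mfl_def)
  show "real (Mfl p k) < Mexp p k" using e c2 by linarith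
  show "Mexp p k \<le> real (Mfl p k) + 1" using e c1 by linarith
qed

lemma Proj_scale:
  fixes G :: "real \<Rightarrow> real"
  assumes I: "I = Ifun k s"
  shows "Proj k s n G = I ^ n * (\<integral>z. G (z / I) * hr n z * rho0 z \<partial>lborel) / (2 ^ n * fact n)"
proof -
  have I0: "0 < I" using I Ifun_pos by simp
  have num: "inner_rho k s G (Hpol k n s) = (1 / I) ^ n * (\<integral>z. G (z / I) * hr n z * rho0 z \<partial>lborel)"
  proof -
    have "inner_rho k s G (Hpol k n s) = (\<integral>z. G (z / I) * Hpol k n s (z / I) * rho0 z \<partial>lborel)"
      unfolding inner_rho_def using int_scale[OF I, of "\<lambda>y. G y * Hpol k n s y"] by simp
    also have "\<dots> = (\<integral>z. (1 / I) ^ n * (G (z / I) * hr n z * rho0 z) \<partial>lborel)"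
      by (simp add: Hpol_scale[OF I] mult_ac)
    also have "\<dots> = (1 / I) ^ n * (\<integral>z. G (z / I) * hr n z * rho0 z \<partial>lborel)"
      by (rule integral_mult_right_zero)
    finally show ?thesis .
  qed
  have den: "inner_rho k s (Hpol k n s) (Hpol k n s) = (1 / I) ^ n * (1 / I) ^ n * (2 ^ n * fact n)"
  proof -
    have "inner_rho k s (Hpol k n s) (Hpol k n s) = (\<integral>z. Hpol k n s (z / I) * Hpol k n s (z / I) * rho0 z \<partial>lborel)"
      unfolding inner_rho_def using int_scale[OF I, of "\<lambda>y. Hpol k n s y * Hpol k n s y"] by simp
    also have "\<dots> = (\<integral>z. ((1 / I) ^ n * (1 / I) ^ n) * (hr n z * hr n z * rho0 z) \<partial>lborel)"
      by (simp add: Hpol_scale[OF I] mult_ac)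
    also have "\<dots> = ((1 / I) ^ n * (1 / I) ^ n) * (\<integral>z. hr n z * hr n z * rho0 z \<partial>lborel)"
      by (rule integral_mult_right_zero)
    also have "\<dots> = (1 / I) ^ n * (1 / I) ^ n * (2 ^ n * fact n)" by (simp add: hr_norm)
    finally show ?thesis .
  qed
  show ?thesis unfolding Proj_def num den using I0
    by (simp add: field_simps power_one_over)
qed

lemma q_meas:
  assumes "(\<lambda>y. q y / (1 + \<bar>y\<bar> powr M)) \<in> borel_measurable lborel"
  shows "(q :: real \<Rightarrow> real) \<in> borel_measurable borel"
proof -
  have m[measurable]: "(\<lambda>y. q y / (1 + \<bar>y\<bar> powr M)) \<in> borel_measurable borel" using assms by simp
  have "(\<lambda>y. q y / (1 + \<bar>y\<bar> powr M) * (1 + \<bar>y\<bar> powr M)) \<in> borel_measurable borel" by measurable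
  moreover have "(\<lambda>y. q y / (1 + \<bar>y\<bar> powr M) * (1 + \<bar>y\<bar> powr M)) = q"
  proof
    fix y
    have "1 + \<bar>y\<bar> powr M > 0" by (simp add: add_pos_nonneg)
    then show "q y / (1 + \<bar>y\<bar> powr M) * (1 + \<bar>y\<bar> powr M) = q y" by simp
  qed
  ultimately show ?thesis by simp
qed

lemma Ifun_big:
  assumes k: "k \<ge> 2" and s: "s \<ge> 1" "s \<ge> 4 * ln L" and L: "L > 0"
  shows "L \<le> Ifun k s"
proof -
  have "1 / real k \<le> 1 / 2" using k by (simp add: field_simps)
  then have h: "s * (1 / real k) \<le> s * (1 / 2)" using s by (intro mult_left_mono) auto
  have "s / 2 * (1 - 1 / real k) = s / 2 - s * (1 / real k) / 2" by (simp add: algebra_simps)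
  then have "s / 4 \<le> s / 2 * (1 - 1 / real k)" using h by linarith
  moreover have "ln L \<le> s / 4" using s by simp
  ultimately have "ln L \<le> s / 2 * (1 - 1 / real k)" by linarith
  then have "exp (ln L) \<le> Ifun k s" unfolding Ifun_def by simp
  then show ?thesis using L by simp
qed

theorem mainTheorem8:
  fixes p :: real and k :: nat
  assumes "p > 1" and "k \<ge> 2"
  shows "\<forall>b0 > 0. \<exists>\<delta>5 > 0. \<forall>\<delta>. 0 < \<delta> \<and> \<delta> < \<delta>5 \<longrightarrow>
           (\<exists>C. \<exists>s5 \<ge> 1. \<forall>s0 \<ge> s5. \<forall>sbar > s0.
              \<forall>(q :: real \<Rightarrow> real \<Rightarrow> real) (b :: real \<Rightarrow> real).
                (\<forall>s \<in> {s0..sbar}. inV p k \<delta> b0 s (q s) (b s)) \<longrightarrow>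
                (\<forall>s \<in> {s0..sbar}. \<forall>n \<le> Mfl p k.
                   \<bar>Proj k s n (Nq p k (b s) (q s))\<bar> \<le> C * Ifun k s powr (- 2 * \<delta>)))"
proof (intro allI impI)
  fix b0 :: real assume b0: "b0 > 0"
  have p: "p > 1" and k2: "k \<ge> 2" using assms by auto
  have k: "k \<ge> 1" using k2 by simp
  define M where "M = Mexp p k"
  define mfl where "mfl = Mfl p k"
  have M0: "0 < M" and Mm: "real mfl < M" and Mm1: "M \<le> real mfl + 1"
    using Mfl_facts[OF p k] by (simp_all add: M_def mfl_def)
  show "\<exists>\<delta>5>0. \<forall>\<delta>. 0 < \<delta> \<and> \<delta> < \<delta>5 \<longrightarrow>
           (\<exists>C. \<exists>s5 \<ge> 1. \<forall>s0 \<ge> s5. \<forall>sbar > s0.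
              \<forall>(q :: real \<Rightarrow> real \<Rightarrow> real) (b :: real \<Rightarrow> real).
                (\<forall>s \<in> {s0..sbar}. inV p k \<delta> b0 s (q s) (b s)) \<longrightarrow>
                (\<forall>s \<in> {s0..sbar}. \<forall>n \<le> Mfl p k.
                   \<bar>Proj k s n (Nq p k (b s) (q s))\<bar> \<le> C * Ifun k s powr (- 2 * \<delta>)))"
  proof (rule exI[of _ "min 1 (M - real mfl)"], intro conjI allI impI)
    show "0 < min 1 (M - real mfl)" using Mm by simp
    fix \<delta> :: real assume \<delta>: "0 < \<delta> \<and> \<delta> < min 1 (M - real mfl)"
    define Good where "Good n C I0 = (1 \<le> I0 \<and> (\<forall>I b a r. I0 \<le> I \<longrightarrow> 0 \<le> b \<longrightarrow> b \<le> 2 * b0 \<longrightarrow>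
      (\<forall>m\<le>mfl. \<bar>a m\<bar> \<le> I powr (-\<delta>)) \<longrightarrow>
      (\<forall>z. \<bar>r z\<bar> \<le> I powr (-\<delta>) * (I powr (-M) + \<bar>z / I\<bar> powr M)) \<longrightarrow>
      r \<in> borel_measurable borel \<longrightarrow>
      \<bar>\<integral>z. Nr p (ez p k b I z * (uP mfl a I z + r z)) * hr n z * rho0 z \<partial>lborel\<bar>
        \<le> C * I powr (- real n - 2 * \<delta>)))" for n C I0
    have ex: "\<forall>n. \<exists>C I0. n \<le> mfl \<longrightarrow> Good n C I0"
    proof
      fix n
      show "\<exists>C I0. n \<le> mfl \<longrightarrow> Good n C I0"
      proof (cases "n \<le> mfl")
        case True
        have "real n + \<delta> \<le> M" using True \<delta> by linarith
        then show ?thesis unfolding Good_def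
          using core[OF p k b0 _ _ _ M0 Mm1, of \<delta> n] \<delta> by auto
      qed auto
    qed
    obtain Cf where Cf: "\<forall>n. \<exists>I0. n \<le> mfl \<longrightarrow> Good n (Cf n) I0"
      using choice[OF ex] by blast
    obtain If where If: "\<forall>n. n \<le> mfl \<longrightarrow> Good n (Cf n) (If n)"
      using choice[OF Cf] by blast
    define Cb where "Cb = (\<Sum>n\<le>mfl. \<bar>Cf n\<bar>)"
    define Ib where "Ib = (\<Sum>n\<le>mfl. If n)"
    have If1: "1 \<le> If n" if "n \<le> mfl" for n using If that by (simp add: Good_def)
    have IfIb: "If n \<le> Ib" if "n \<le> mfl" for n
      unfolding Ib_def
    proof (rule member_le_sum)
      fix x assume "x \<in> {..mfl} - {n}"
      then show "0 \<le> If x" using If1[of x] by simp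
    qed (use that in auto)
    have Ib0: "0 < Ib" using IfIb[of 0] If1[of 0] by simp
    have CfCb: "\<bar>Cf n\<bar> \<le> Cb" if "n \<le> mfl" for n
      unfolding Cb_def using that by (intro member_le_sum) auto
    show "\<exists>C. \<exists>s5 \<ge> 1. \<forall>s0 \<ge> s5. \<forall>sbar > s0.
              \<forall>(q :: real \<Rightarrow> real \<Rightarrow> real) (b :: real \<Rightarrow> real).
                (\<forall>s \<in> {s0..sbar}. inV p k \<delta> b0 s (q s) (b s)) \<longrightarrow>
                (\<forall>s \<in> {s0..sbar}. \<forall>n \<le> Mfl p k.
                   \<bar>Proj k s n (Nq p k (b s) (q s))\<bar> \<le> C * Ifun k s powr (- 2 * \<delta>))"
    proof (rule exI[of _ Cb], rule exI[of _ "max 1 (4 * ln Ib)"], intro conjI allI impI ballI)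
      show "1 \<le> max 1 (4 * ln Ib)" by simp
      fix s0 sbar :: real and q :: "real \<Rightarrow> real \<Rightarrow> real" and b :: "real \<Rightarrow> real" and s :: real and n :: nat
      assume s0: "max 1 (4 * ln Ib) \<le> s0" and "s0 < sbar"
        and hV: "\<forall>s\<in>{s0..sbar}. inV p k \<delta> b0 s (q s) (b s)" and s: "s \<in> {s0..sbar}" and n: "n \<le> Mfl p k"
      have nm: "n \<le> mfl" using n by (simp add: mfl_def)
      define I where "I = Ifun k s"
      have I0: "0 < I" by (simp add: I_def Ifun_pos)
      have IIb: "Ib \<le> I" unfolding I_def using s s0 Ib0 by (intro Ifun_big[OF k2]) auto
      have I1: "1 \<le> I" using IIb IfIb[of 0] If1[of 0] by simp
      have V: "inV p k \<delta> b0 s (q s) (b s)" using hV s by blast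
      define a where "a m = Proj k s m (q s)" for m
      define r where "r z = qminus p k s (q s) (z / I)" for z
      have qm[measurable]: "q s \<in> borel_measurable borel"
        using V unfolding inV_def by (intro q_meas) (auto simp: M_def)
      have rm: "r \<in> borel_measurable borel"
        unfolding r_def qminus_def Hpol_def by measurable
      have bb: "0 \<le> b s" "b s \<le> 2 * b0" using V b0 unfolding inV_def by auto
      have ab: "\<forall>m\<le>mfl. \<bar>a m\<bar> \<le> I powr (-\<delta>)"
      proof (intro allI impI)
        fix m assume m: "m \<le> mfl"
        show "\<bar>a m\<bar> \<le> I powr (-\<delta>)"
        proof (cases "m = 2 * k")
          case True
          have "\<bar>a m\<bar> \<le> I powr (- 2 * \<delta>)" using V True unfolding inV_def a_def I_def by simp
          also have "\<dots> \<le> I powr (-\<delta>)" using I1 \<delta> by (intro powr_mono) auto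
          finally show ?thesis .
        next
          case False
          then show ?thesis using V m unfolding inV_def a_def I_def mfl_def by auto
        qed
      qed
      have rb: "\<forall>z. \<bar>r z\<bar> \<le> I powr (-\<delta>) * (I powr (-M) + \<bar>z / I\<bar> powr M)"
      proof
        fix z
        have h: "\<bar>qminus p k s (q s) (z / I)\<bar> / (I powr (- M) + \<bar>z / I\<bar> powr M) \<le> I powr (-\<delta>)"
          using V unfolding inV_def I_def M_def by blast
        have "0 < I powr (- M) + \<bar>z / I\<bar> powr M" using I0 by (simp add: add_pos_nonneg)
        then show "\<bar>r z\<bar> \<le> I powr (-\<delta>) * (I powr (-M) + \<bar>z / I\<bar> powr M)"
          using h unfolding r_def by (simp add: divide_le_eq mult.commute)
      qed
      have G: "Good n (Cf n) (If n)" using If nm by blast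
      have main: "\<bar>\<integral>z. Nr p (ez p k (b s) I z * (uP mfl a I z + r z)) * hr n z * rho0 z \<partial>lborel\<bar>
          \<le> Cf n * I powr (- real n - 2 * \<delta>)"
        using G IfIb[OF nm] IIb bb ab rb rm unfolding Good_def by auto
      have integrand: "Nq p k (b s) (q s) (z / I) = Nr p (ez p k (b s) I z * (uP mfl a I z + r z))" for z
      proof -
        have "uP mfl a I z + r z = q s (z / I)"
          unfolding uP_def r_def qminus_def a_def mfl_def by (simp add: Hpol_scale[OF I_def] mult_ac atLeast0AtMost)
        then show ?thesis by (simp add: Nq_def Nr_def eb_def ez_def mult.assoc)
      qed
      have PS: "Proj k s n (Nq p k (b s) (q s)) =
          I ^ n * (\<integral>z. Nr p (ez p k (b s) I z * (uP mfl a I z + r z)) * hr n z * rho0 z \<partial>lborel) / (2 ^ n * fact n)"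
        unfolding Proj_scale[OF I_def] integrand ..
      define X where "X = (\<integral>z. Nr p (ez p k (b s) I z * (uP mfl a I z + r z)) * hr n z * rho0 z \<partial>lborel)"
      have c1: "1 \<le> (2 ^ n * fact n :: real)"
      proof -
        have "(1::real) \<le> 2 ^ n" by (rule one_le_power) simp
        moreover have "(1::real) \<le> fact n" by (rule fact_ge_1)
        ultimately have "1 * 1 \<le> (2 ^ n * fact n :: real)" by (intro mult_mono) auto
        then show ?thesis by simp
      qed
      have "\<bar>Proj k s n (Nq p k (b s) (q s))\<bar> = I ^ n * \<bar>X\<bar> / (2 ^ n * fact n)"
        unfolding PS X_def using I0 by (simp add: abs_mult)
      also have "\<dots> \<le> I ^ n * \<bar>X\<bar> / 1"
        using c1 I0 by (intro divide_left_mono) auto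
      also have "\<dots> = I ^ n * \<bar>X\<bar>" by simp
      also have "\<dots> \<le> I ^ n * (\<bar>Cf n\<bar> * I powr (- real n - 2 * \<delta>))"
        using main I0 unfolding X_def by (intro mult_left_mono) (auto intro: order_trans abs_ge_self)
      also have "\<dots> = \<bar>Cf n\<bar> * I powr (- 2 * \<delta>)"
      proof -
        have e1: "I powr (real n) = I ^ n" using I0 by (rule powr_realpow)
        have "I ^ n * I powr (- real n - 2 * \<delta>) = I powr (real n) * I powr (- real n - 2 * \<delta>)"
          using e1 by simp
        also have "\<dots> = I powr (real n + (- real n - 2 * \<delta>))" by (rule powr_add[symmetric])
        also have "\<dots> = I powr (- 2 * \<delta>)" by simp
        finally have "I ^ n * I powr (- real n - 2 * \<delta>) = I powr (- 2 * \<delta>)" .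
        then show ?thesis by (metis mult.left_commute)
      qed
      also have "\<dots> \<le> Cb * I powr (- 2 * \<delta>)" using CfCb[OF nm] by (intro mult_right_mono) auto
      finally show "\<bar>Proj k s n (Nq p k (b s) (q s))\<bar> \<le> Cb * Ifun k s powr (- 2 * \<delta>)" by (simp add: I_def)
    qed
  qed
qed


end
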